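(* Let $\mathbb{M}',\mathbb{M}''$ be partial groups and let $(t,\eta)$ be a twisting pair, with $t\colon\mathbb{M}''_1\to\mathrm{Aut}(\mathbb{M}')$ and $\eta\colon\mathbb{M}''_2\to N(\mathbb{M}')$. Then $(t,\eta)$ determines a twisting function $\{\phi_n\colon\mathbb{M}''_n\to\underline{\mathrm{aut}}_{n-1}(\mathbb{M}')=N_{n-1}\mathcal{A}ut(\mathbb{M}')\}_{n\ge1}$ with $\phi_1[g]=t(g)$ and $\phi_2[g|h]=\big(t(g)\xleftarrow{\eta(g,h)}t(gh)\circ t(h)^{-1}\big)$. Moreover, every twisting function $\{\phi_n\colon\mathbb{M}''_n\to\underline{\mathrm{aut}}_{n-1}(\mathbb{M}')\}_{n\ge1}$ arises in this way from some twisting pair.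
   Context: Partial groups are simplicial sets whose $n$-simplices are words $[x_1|\dots|x_n]$ (faces multiply adjacent letters or delete first/last letter; degeneracies insert $1$). $N(\mathbb{M}')$ is the normalizer: the set of $\eta\in\mathbb{M}'_1$ such that for all $x$, $[\eta|x|\eta^{-1}]\in\mathbb{M}'$ and $x\mapsto\eta x\eta^{-1}$ extends to an automorphism, and for every simplex $[x_1|\dots|x_n]$ the words $[\eta x_1\eta^{-1}|\dots|\eta x_i\eta^{-1}|\eta|x_{i+1}|\dots|x_n]$ are simplices with equal products. The simplicial group $\underline{\mathrm{aut}}(\mathbb{M}')$ is identified with the nerve of the category $\mathcal{A}ut(\mathbb{M}')$ whose objects are automorphisms of $\mathbb{M}'$ and whose morphisms $(\Phi\xleftarrow{\eta}\Psi)$ are elements $\eta\in N(\mathbb{M}')$ arising as $F(v,\iota_1)$ for a simplicial homotopy $F\colon\mathbb{M}'\times\Delta[1]\to\mathbb{M}'$ with $F|_{\bullet_0}=\Phi$, $F|_{\bullet_1}=\Psi$; composition is multiplication of the $\eta$'s and the group structure is $(\Phi_0\xleftarrow{\omega}\Phi_1)\otimes(\Psi_0\xleftarrow{\eta}\Psi_1)=(\Phi_0\Psi_0\xleftarrow{\Phi_0(\eta)\omega}\Phi_1\Psi_1)$. A twisting pair is a pair of functions $t\colon\mathbb{M}''_1\to\mathrm{Aut}(\mathbb{M}')$ and $\eta\colon\mathbb{M}''_2\to N(\mathbb{M}')$ with (a) $t(1)=\mathrm{Id}$ and $\eta(1,g)=1=\eta(g,1)$ for all $[g]\in\mathbb{M}''_1$;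 (b) $t(g)(\eta(h,k))\cdot\eta(g,hk)=\eta(g,h)\cdot\eta(gh,k)$ for all $[g|h|k]\in\mathbb{M}''_3$. A twisting function is a family $\phi_n\colon\mathbb{M}''_n\to\underline{\mathrm{aut}}_{n-1}(\mathbb{M}')$, $n\ge1$, such that for all $b\in\mathbb{M}''_n$: $\phi_{n-1}(d_ib)=d_{i-1}(\phi_n(b))$ for $2\le i\le n$; $\phi_{n-1}(d_1b)=d_0(\phi_n(b))\cdot\phi_{n-1}(d_0b)$; $\phi_{n+1}(s_ib)=s_{i-1}(\phi_n(b))$ for $i\ge1$; $\phi_{n+1}(s_0b)=1$. *)

theory Defs
  imports Main
begin

section \<open>Partial groups (Chermak), carrier = the whole type\<close>

record 'a partial_group =
  pdom :: "'a list set"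
  pprod :: "'a list \<Rightarrow> 'a"
  pinv :: "'a \<Rightarrow> 'a"

definition pone :: "'a partial_group \<Rightarrow> 'a" where
  "pone M = pprod M []"

definition partial_group :: "'a partial_group \<Rightarrow> bool" where
  "partial_group M \<longleftrightarrow>
     (\<forall>x. [x] \<in> pdom M) \<and>
     (\<forall>u v. u @ v \<in> pdom M \<longrightarrow> u \<in> pdom M \<and> v \<in> pdom M) \<and>
     (\<forall>x. pprod M [x] = x) \<and>
     (\<forall>u v w. u @ v @ w \<in> pdom M \<longrightarrow>
        u @ [pprod M v] @ w \<in> pdom M \<and> pprod M (u @ v @ w) = pprod M (u @ [pprod M v] @ w)) \<and>
     (\<forall>x. pinv M (pinv M x) = x) \<and>
     (\<forall>w\<in>pdom M. rev (map (pinv M) w) @ w \<in> pdom M \<and>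
        pprod M (rev (map (pinv M) w) @ w) = pone M)"

text \<open>Simplicial structure: n-simplices are the words of length n in the domain.
  Face d_i (0 \<le> i \<le> n, n \<ge> 1) and degeneracy s_i (0 \<le> i \<le> n).\<close>

definition pg_face :: "'a partial_group \<Rightarrow> nat \<Rightarrow> 'a list \<Rightarrow> 'a list" where
  "pg_face M i w =
     (if i = 0 then tl w
      else if i = length w then butlast w
      else take (i - 1) w @ [pprod M [w ! (i - 1), w ! i]] @ drop (Suc i) w)"

definition pg_degen :: "'a partial_group \<Rightarrow> nat \<Rightarrow> 'a list \<Rightarrow> 'a list" where
  "pg_degen M i w = take i w @ [pone M] @ drop i w"

definition pg_aut :: "'a partial_group \<Rightarrow> ('a \<Rightarrow> 'a) set" where
  "pg_aut M = {f. bij f \<and> (\<forall>w. w \<in> pdom M \<longleftrightarrow> map f w \<in> pdom M) \<and>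
                 (\<forall>w\<in>pdom M. f (pprod M w) = pprod M (map f w))}"

definition pconj :: "'a partial_group \<Rightarrow> 'a \<Rightarrow> 'a \<Rightarrow> 'a" where
  "pconj M e x = pprod M [e, x, pinv M e]"

definition nword :: "'a partial_group \<Rightarrow> 'a \<Rightarrow> nat \<Rightarrow> 'a list \<Rightarrow> 'a list" where
  "nword M e i w = map (pconj M e) (take i w) @ [e] @ drop i w"

definition normalizer :: "'a partial_group \<Rightarrow> 'a set" where
  "normalizer M = {e. (\<forall>x. [e, x, pinv M e] \<in> pdom M) \<and> pconj M e \<in> pg_aut M \<and>
      (\<forall>w\<in>pdom M. \<forall>i\<le>length w. nword M e i w \<in> pdom M \<and>
          pprod M (nword M e i w) = pprod M (nword M e 0 w))}"

text \<open>An n-simplex of \<Delta>[1] is a monotone map [n] \<rightarrow> [1], encoded by the number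
  k \<le> n+1 of entries equal to 0.  An n-simplex of M \<times> \<Delta>[1] is a pair (w,k).\<close>

definition d1_face :: "nat \<Rightarrow> nat \<Rightarrow> nat" where
  "d1_face i k = (if i < k then k - 1 else k)"

definition d1_degen :: "nat \<Rightarrow> nat \<Rightarrow> nat" where
  "d1_degen i k = (if i < k then Suc k else k)"

definition pg_homotopy :: "'a partial_group \<Rightarrow> ('a list \<Rightarrow> nat \<Rightarrow> 'a list) \<Rightarrow> bool" where
  "pg_homotopy M F \<longleftrightarrow>
     (\<forall>w\<in>pdom M. \<forall>k\<le>Suc (length w). F w k \<in> pdom M \<and> length (F w k) = length w) \<and>
     (\<forall>w\<in>pdom M. \<forall>k\<le>Suc (length w). \<forall>i\<le>length w. 0 < length w \<longrightarrow>
        F (pg_face M i w) (d1_face i k) = pg_face M i (F w k)) \<and>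
     (\<forall>w\<in>pdom M. \<forall>k\<le>Suc (length w). \<forall>i\<le>length w.
        F (pg_degen M i w) (d1_degen i k) = pg_degen M i (F w k))"

text \<open>Morphism (Phi <-eta- Psi) of the category Aut(M): eta = F(s_0 v, iota_1) for a
  homotopy F with F restricted to vertex 0 equal to Phi, to vertex 1 equal to Psi.
  Vertex 0 in degree n is k = n+1, vertex 1 is k = 0, iota_1 is k = 1 in degree 1.\<close>

definition aut_mor :: "'a partial_group \<Rightarrow> ('a \<Rightarrow> 'a) \<Rightarrow> 'a \<Rightarrow> ('a \<Rightarrow> 'a) \<Rightarrow> bool" where
  "aut_mor M Phi e Psi \<longleftrightarrow> Phi \<in> pg_aut M \<and> Psi \<in> pg_aut M \<and> e \<in> normalizer M \<and>
     (\<exists>F. pg_homotopy M F \<and>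
          (\<forall>w\<in>pdom M. F w (Suc (length w)) = map Phi w) \<and>
          (\<forall>w\<in>pdom M. F w 0 = map Psi w) \<and>
          F [pone M] 1 = [e])"

text \<open>An n-simplex Phi_0 <-eta_1- Phi_1 <- ... <-eta_n- Phi_n is stored as the pair
  ([Phi_0,...,Phi_n], [eta_1,...,eta_n]).\<close>

type_synonym 'a aut_simplex = "('a \<Rightarrow> 'a) list \<times> 'a list"

definition nerve_simplex :: "'a partial_group \<Rightarrow> nat \<Rightarrow> 'a aut_simplex \<Rightarrow> bool" where
  "nerve_simplex M n s \<longleftrightarrow> length (fst s) = Suc n \<and> length (snd s) = n \<and>
     (\<forall>f\<in>set (fst s). f \<in> pg_aut M) \<and>
     (\<forall>i<n. aut_mor M (fst s ! i) (snd s ! i) (fst s ! Suc i))"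

definition nerve_face :: "'a partial_group \<Rightarrow> nat \<Rightarrow> 'a aut_simplex \<Rightarrow> 'a aut_simplex" where
  "nerve_face M i s = (take i (fst s) @ drop (Suc i) (fst s), pg_face M i (snd s))"

definition nerve_degen :: "'a partial_group \<Rightarrow> nat \<Rightarrow> 'a aut_simplex \<Rightarrow> 'a aut_simplex" where
  "nerve_degen M i s = (take (Suc i) (fst s) @ drop i (fst s), pg_degen M i (snd s))"

text \<open>Group structure: (Phi0 <-omega- Phi1) (x) (Psi0 <-eta- Psi1)
  = (Phi0 Psi0 <-Phi0(eta) omega- Phi1 Psi1), applied levelwise.\<close>

definition nerve_mult :: "'a partial_group \<Rightarrow> 'a aut_simplex \<Rightarrow> 'a aut_simplex \<Rightarrow> 'a aut_simplex" where
  "nerve_mult M s s' =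
     (map (\<lambda>(f, g). f \<circ> g) (zip (fst s) (fst s')),
      map (\<lambda>j. pprod M [(fst s ! j) (snd s' ! j), snd s ! j]) [0..<length (snd s)])"

definition nerve_unit :: "'a partial_group \<Rightarrow> nat \<Rightarrow> 'a aut_simplex" where
  "nerve_unit M n = (replicate (Suc n) id, replicate n (pone M))"

definition twisting_pair ::
  "'a partial_group \<Rightarrow> 'b partial_group \<Rightarrow> ('a \<Rightarrow> 'b \<Rightarrow> 'b) \<Rightarrow> ('a \<Rightarrow> 'a \<Rightarrow> 'b) \<Rightarrow> bool" where
  "twisting_pair M2 M1 t eta \<longleftrightarrow>
     (\<forall>g. t g \<in> pg_aut M1) \<and>
     (\<forall>g h. [g, h] \<in> pdom M2 \<longrightarrow> eta g h \<in> normalizer M1) \<and>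
     (\<forall>g h. [g, h] \<in> pdom M2 \<longrightarrow>
        aut_mor M1 (t g) (eta g h) (t (pprod M2 [g, h]) \<circ> inv (t h))) \<and>
     t (pone M2) = id \<and>
     (\<forall>g. eta (pone M2) g = pone M1 \<and> eta g (pone M2) = pone M1) \<and>
     (\<forall>g h k. [g, h, k] \<in> pdom M2 \<longrightarrow>
        pprod M1 [t g (eta h k), eta g (pprod M2 [h, k])] =
        pprod M1 [eta g h, eta (pprod M2 [g, h]) k])"

definition twisting_function ::
  "'a partial_group \<Rightarrow> 'b partial_group \<Rightarrow> (nat \<Rightarrow> 'a list \<Rightarrow> 'b aut_simplex) \<Rightarrow> bool" where
  "twisting_function M2 M1 phi \<longleftrightarrow>
     (\<forall>n\<ge>1. \<forall>b\<in>pdom M2. length b = n \<longrightarrow>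
        nerve_simplex M1 (n - 1) (phi n b) \<and>
        (\<forall>i. 2 \<le> i \<and> i \<le> n \<longrightarrow>
           phi (n - 1) (pg_face M2 i b) = nerve_face M1 (i - 1) (phi n b)) \<and>
        (2 \<le> n \<longrightarrow> phi (n - 1) (pg_face M2 1 b) =
           nerve_mult M1 (nerve_face M1 0 (phi n b)) (phi (n - 1) (pg_face M2 0 b))) \<and>
        (\<forall>i. 1 \<le> i \<and> i \<le> n \<longrightarrow>
           phi (Suc n) (pg_degen M2 i b) = nerve_degen M1 (i - 1) (phi n b)) \<and>
        phi (Suc n) (pg_degen M2 0 b) = nerve_unit M1 n)"

definition low_values ::
  "'a partial_group \<Rightarrow> 'b partial_group \<Rightarrow> ('a \<Rightarrow> 'b \<Rightarrow> 'b) \<Rightarrow> ('a \<Rightarrow> 'a \<Rightarrow> 'b)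
     \<Rightarrow> (nat \<Rightarrow> 'a list \<Rightarrow> 'b aut_simplex) \<Rightarrow> bool" where
  "low_values M2 M1 t eta phi \<longleftrightarrow>
     (\<forall>g. phi 1 [g] = ([t g], [])) \<and>
     (\<forall>g h. [g, h] \<in> pdom M2 \<longrightarrow>
        phi 2 [g, h] = ([t g, t (pprod M2 [g, h]) \<circ> inv (t h)], [eta g h]))"

end

theory Submission
  imports Defs
begin

locale pgrp =
  fixes M :: "'a partial_group"
  assumes pg: "partial_group M"
begin

abbreviation "Dw \<equiv> pdom M"
abbreviation "Pw \<equiv> pprod M"
abbreviation "Iv \<equiv> pinv M"
abbreviation "un \<equiv> pone M"

definition iw :: "'a list \<Rightarrow> 'a list" where "iw w = rev (map Iv w)"

lemma single[simp]: "[x] \<in> Dw" using pg unfolding partial_group_def by blast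
lemma split_dom: "u @ v \<in> Dw \<Longrightarrow> u \<in> Dw \<and> v \<in> Dw" using pg unfolding partial_group_def by blast
lemma P_single[simp]: "Pw [x] = x" using pg unfolding partial_group_def by blast
lemma assoc: "u @ v @ w \<in> Dw \<Longrightarrow> u @ [Pw v] @ w \<in> Dw \<and> Pw (u @ v @ w) = Pw (u @ [Pw v] @ w)"
  using pg unfolding partial_group_def by blast
lemma II[simp]: "Iv (Iv x) = x" using pg unfolding partial_group_def by blast
lemma inv_ax: "w \<in> Dw \<Longrightarrow> iw w @ w \<in> Dw \<and> Pw (iw w @ w) = un"
  using pg unfolding partial_group_def iw_def by blast

lemma pre_dom: "u @ v \<in> Dw \<Longrightarrow> u \<in> Dw" using split_dom by blast
lemma suf_dom: "u @ v \<in> Dw \<Longrightarrow> v \<in> Dw" using split_dom by blast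
lemma mid_dom: "u @ v @ w \<in> Dw \<Longrightarrow> v \<in> Dw" using split_dom by blast
lemma nil_dom[simp]: "[] \<in> Dw" using pre_dom[of "[]" "[x]"] by simp

lemma iw_simps[simp]: "iw [] = []" "iw (x # w) = iw w @ [Iv x]" "iw (u @ v) = iw v @ iw u"
  "iw (iw w) = w" "length (iw w) = length w"
  by (auto simp: iw_def rev_map[symmetric] map_map o_def)

lemma iw_dom: "w \<in> Dw \<Longrightarrow> iw w \<in> Dw" using inv_ax pre_dom by blast
lemma iw_dom_iff[simp]: "iw w \<in> Dw \<longleftrightarrow> w \<in> Dw" using iw_dom by fastforce
lemma self_iw: "w \<in> Dw \<Longrightarrow> w @ iw w \<in> Dw \<and> Pw (w @ iw w) = un"
  using inv_ax[of "iw w"] by simp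

lemma unit_ins: "u @ w \<in> Dw \<Longrightarrow> u @ [un] @ w \<in> Dw \<and> Pw (u @ [un] @ w) = Pw (u @ w)"
  using assoc[of u "[]" w] by (simp add: pone_def)

lemma P2: "u @ v \<in> Dw \<Longrightarrow> [Pw u, Pw v] \<in> Dw \<and> Pw (u @ v) = Pw [Pw u, Pw v]"
proof -
  assume h: "u @ v \<in> Dw"
  from assoc[of "[]" u v] h have 1: "[Pw u] @ v \<in> Dw" "Pw (u @ v) = Pw ([Pw u] @ v)" by auto
  from assoc[of "[Pw u]" v "[]"] 1 show ?thesis by auto
qed

lemma P_cons: "x # v \<in> Dw \<Longrightarrow> [x, Pw v] \<in> Dw \<and> Pw (x # v) = Pw [x, Pw v]"
  using P2[of "[x]" v] by simp
lemma P_snoc: "v @ [x] \<in> Dw \<Longrightarrow> [Pw v, x] \<in> Dw \<and> Pw (v @ [x]) = Pw [Pw v, x]"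
  using P2[of v "[x]"] by simp

lemma P_nil: "Pw [] = un" by (simp add: pone_def)

lemma unit_l[simp]: "Pw [un, x] = x" using unit_ins[of "[]" "[x]"] by simp
lemma unit_r[simp]: "Pw [x, un] = x" using unit_ins[of "[x]" "[]"] by simp
lemma unit_l_dom[simp]: "[un, x] \<in> Dw" using unit_ins[of "[]" "[x]"] by simp
lemma unit_r_dom[simp]: "[x, un] \<in> Dw" using unit_ins[of "[x]" "[]"] by simp

lemma inv_l: "[Iv x, x] \<in> Dw \<and> Pw [Iv x, x] = un" using inv_ax[of "[x]"] by simp
lemma inv_r: "[x, Iv x] \<in> Dw \<and> Pw [x, Iv x] = un" using inv_ax[of "[Iv x]"] by simp

lemma I_un[simp]: "Iv un = un" using inv_l[of un] by simp

lemma inv_unique: assumes "[a, b] \<in> Dw" "Pw [a, b] = un" shows "b = Iv a"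
proof -
  have d: "[Iv b, Iv a, a, b] \<in> Dw" using inv_ax[OF assms(1)] by simp
  hence d3: "[Iv a, a, b] \<in> Dw" using suf_dom[of "[Iv b]"] by simp
  have "Pw [Iv a, a, b] = Pw [Pw [Iv a, a], b]" using assoc[of "[]" "[Iv a, a]" "[b]"] d3 by simp
  also have "\<dots> = b" using inv_l by simp
  finally have 1: "Pw [Iv a, a, b] = b" .
  have "Pw [Iv a, a, b] = Pw [Iv a, Pw [a, b]]" using assoc[of "[Iv a]" "[a, b]" "[]"] d3 by simp
  also have "\<dots> = Iv a" using assms by simp
  finally show ?thesis using 1 by simp
qed

lemma P_iw: assumes "w \<in> Dw" shows "Pw (iw w) = Iv (Pw w)"
proof -
  have "iw w @ w \<in> Dw" "Pw (iw w @ w) = un" using inv_ax[OF assms] by auto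
  with P2[of "iw w" w] have "[Pw (iw w), Pw w] \<in> Dw" "Pw [Pw (iw w), Pw w] = un" by auto
  from inv_unique[OF this] show ?thesis by simp
qed

lemma cancel_l: assumes "[a, x] \<in> Dw" shows "x = Pw [Iv a, Pw [a, x]]"
proof -
  have d: "[Iv x, Iv a, a, x] \<in> Dw" using inv_ax[OF assms(1)] by simp
  hence d3: "[Iv a, a, x] \<in> Dw" using suf_dom[of "[Iv x]"] by simp
  have "Pw [Iv a, a, x] = Pw [Pw [Iv a, a], x]" using assoc[of "[]" "[Iv a, a]" "[x]"] d3 by simp
  also have "\<dots> = x" using inv_l by simp
  finally have 1: "Pw [Iv a, a, x] = x" .
  have "Pw [Iv a, a, x] = Pw [Iv a, Pw [a, x]]" using assoc[of "[Iv a]" "[a, x]" "[]"] d3 by simp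
  with 1 show ?thesis by simp
qed

end

context pgrp begin

abbreviation "Aut \<equiv> pg_aut M"
abbreviation "NN \<equiv> normalizer M"
abbreviation "cj \<equiv> pconj M"

lemma autD: assumes "f \<in> Aut"
  shows "bij f" "map f w \<in> Dw \<longleftrightarrow> w \<in> Dw" "w \<in> Dw \<Longrightarrow> f (Pw w) = Pw (map f w)"
  using assms unfolding pg_aut_def by auto

lemma aut_un: "f \<in> Aut \<Longrightarrow> f un = un"
  using autD(3)[of f "[]"] by (simp add: pone_def)

lemma aut_hom2: "f \<in> Aut \<Longrightarrow> [x, y] \<in> Dw \<Longrightarrow> f (Pw [x, y]) = Pw [f x, f y]"
  using autD(3)[of f "[x,y]"] by simp

lemma aut_I: assumes "f \<in> Aut" shows "f (Iv x) = Iv (f x)"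
proof -
  have "[f x, f (Iv x)] \<in> Dw" using autD(2)[OF assms, of "[x, Iv x]"] inv_r by simp
  moreover have "Pw [f x, f (Iv x)] = un" using aut_hom2[OF assms, of x "Iv x"] inv_r aut_un[OF assms] by simp
  ultimately show ?thesis using inv_unique by simp
qed

lemma aut_iw: "f \<in> Aut \<Longrightarrow> map f (iw w) = iw (map f w)"
  by (simp add: iw_def rev_map aut_I)

lemma aut_inv_l[simp]: "f \<in> Aut \<Longrightarrow> inv f (f x) = x"
  by (rule inv_f_f[OF bij_is_inj[OF autD(1)]])
lemma aut_inv_r[simp]: "f \<in> Aut \<Longrightarrow> f (inv f x) = x"
  by (rule surj_f_inv_f[OF bij_is_surj[OF autD(1)]])
lemma aut_inv_comp_l[simp]: "f \<in> Aut \<Longrightarrow> inv f \<circ> f = id" by (rule ext) simp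
lemma aut_inv_comp_r[simp]: "f \<in> Aut \<Longrightarrow> f \<circ> inv f = id" by (rule ext) simp
lemma map_inv_l[simp]: "f \<in> Aut \<Longrightarrow> map (inv f) (map f w) = w" by (induct w) auto
lemma map_inv_r[simp]: "f \<in> Aut \<Longrightarrow> map f (map (inv f) w) = w" by (induct w) auto

lemma aut_id[simp]: "id \<in> Aut" unfolding pg_aut_def by auto

lemma aut_comp: assumes "f \<in> Aut" "g \<in> Aut" shows "f \<circ> g \<in> Aut"
proof -
  have "bij (f \<circ> g)" using autD(1)[OF assms(1)] autD(1)[OF assms(2)] bij_comp by blast
  moreover have "map (f \<circ> g) w \<in> Dw \<longleftrightarrow> w \<in> Dw" for w
    using autD(2)[OF assms(1), of "map g w"] autD(2)[OF assms(2), of w] by simp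
  moreover have "(f \<circ> g) (Pw w) = Pw (map (f \<circ> g) w)" if "w \<in> Dw" for w
    using autD(3)[OF assms(1), of "map g w"] autD(3)[OF assms(2), of w] autD(2)[OF assms(2), of w] that by simp
  ultimately show ?thesis unfolding pg_aut_def by auto
qed

lemma aut_inv: assumes "f \<in> Aut" shows "inv f \<in> Aut"
proof -
  have "bij (inv f)" using autD(1)[OF assms] bij_imp_bij_inv by blast
  moreover have "map (inv f) w \<in> Dw \<longleftrightarrow> w \<in> Dw" for w
    using autD(2)[OF assms, of "map (inv f) w"] assms by simp
  moreover have "inv f (Pw w) = Pw (map (inv f) w)" if "w \<in> Dw" for w
  proof -
    have "map (inv f) w \<in> Dw" using calculation(2) that by simp
    hence "f (Pw (map (inv f) w)) = Pw w" using autD(3)[OF assms] assms by simp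
    thus ?thesis by (metis assms aut_inv_l)
  qed
  ultimately show ?thesis unfolding pg_aut_def by auto
qed

lemma aut_ext_inv: "f \<in> Aut \<Longrightarrow> (\<And>x. f (g x) = x) \<Longrightarrow> g = inv f"
  by (rule ext) (metis aut_inv_l)

lemma NND: assumes "e \<in> NN"
  shows "[e, x, Iv e] \<in> Dw" "cj e \<in> Aut"
    "w \<in> Dw \<Longrightarrow> i \<le> length w \<Longrightarrow> nword M e i w \<in> Dw \<and> Pw (nword M e i w) = Pw (e # w)"
  using assms unfolding normalizer_def nword_def by auto

lemma nword0[simp]: "nword M e 0 w = e # w" by (simp add: nword_def)

lemma cons_dom: "e \<in> NN \<Longrightarrow> w \<in> Dw \<Longrightarrow> e # w \<in> Dw"
  using NND(3)[of e w 0] by simp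

lemma snoc_dom: assumes "e \<in> NN" "w \<in> Dw" shows "w @ [e] \<in> Dw"
proof -
  let ?v = "map (inv (cj e)) w"
  have v: "?v \<in> Dw" using autD(2)[OF aut_inv[OF NND(2)[OF assms(1)]]] assms(2) by simp
  have "nword M e (length ?v) ?v = w @ [e]" using NND(2)[OF assms(1)] by (simp add: nword_def)
  with NND(3)[OF assms(1) v, of "length ?v"] show ?thesis by simp
qed

lemma snoc_I_dom: assumes "e \<in> NN" "w \<in> Dw" shows "w @ [Iv e] \<in> Dw"
  using cons_dom[OF assms(1), of "iw w"] assms(2) iw_dom[of "e # iw w"] by simp

lemma cons_I_dom: assumes "e \<in> NN" "w \<in> Dw" shows "Iv e # w \<in> Dw"
  using snoc_dom[OF assms(1), of "iw w"] assms(2) iw_dom[of "iw w @ [e]"] by simp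

lemma cj_def2: "cj e x = Pw [e, x, Iv e]" by (simp add: pconj_def)

lemma un_NN: "un \<in> NN"
proof -
  have c: "cj un = id"
  proof (rule ext)
    fix x have "[un, x, Iv un] \<in> Dw" using unit_ins[of "[]" "[x, un]"] by simp
    have "Pw [un, x, un] = Pw [x, un]" using unit_ins[of "[]" "[x, un]"] by simp
    thus "cj un x = id x" by (simp add: cj_def2)
  qed
  show ?thesis unfolding normalizer_def
  proof (intro CollectI conjI allI ballI impI)
    fix x show "[un, x, Iv un] \<in> Dw" using unit_ins[of "[]" "[x, un]"] by simp
  next show "cj un \<in> Aut" using c by simp
  next fix w i assume w: "w \<in> Dw" and i: "i \<le> length w"
    have "nword M un i w = take i w @ [un] @ drop i w" using c by (simp add: nword_def)
    with unit_ins[of "take i w" "drop i w"] w show "nword M un i w \<in> Dw"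
      "Pw (nword M un i w) = Pw (nword M un 0 w)" by (auto simp: unit_ins[of "[]" w, simplified])
  qed
qed

end

context pgrp begin

lemma I_prod: assumes "[e, f] \<in> Dw" shows "Iv (Pw [e, f]) = Pw [Iv f, Iv e]"
proof -
  have "[e, f] @ [Iv f, Iv e] \<in> Dw" "Pw ([e, f] @ [Iv f, Iv e]) = un" using self_iw[OF assms] by auto
  with P2[of "[e,f]" "[Iv f, Iv e]"] have "[Pw [e, f], Pw [Iv f, Iv e]] \<in> Dw" "Pw [Pw [e, f], Pw [Iv f, Iv e]] = un"
    by auto
  from inv_unique[OF this] show ?thesis by simp
qed

lemma NN_pair: "e \<in> NN \<Longrightarrow> [e, x] \<in> Dw" using cons_dom[of e "[x]"] by simp

lemma cj_prod_pt: assumes e: "e \<in> NN" and f: "f \<in> NN"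
  shows "[Pw [e, f], x, Iv (Pw [e, f])] \<in> Dw \<and> cj (Pw [e, f]) x = cj e (cj f x)"
proof -
  have "[x, Iv f] \<in> Dw" using snoc_I_dom[OF f, of "[x]"] by simp
  hence "[f, x, Iv f] \<in> Dw" using cons_dom[OF f] by simp
  hence "[f, x, Iv f, Iv e] \<in> Dw" using snoc_I_dom[OF e, of "[f, x, Iv f]"] by simp
  hence W: "[e, f, x, Iv f, Iv e] \<in> Dw" using cons_dom[OF e] by simp
  from assoc[of "[]" "[e, f]" "[x, Iv f, Iv e]"] W
  have 1: "[Pw [e, f], x, Iv f, Iv e] \<in> Dw" "Pw [e, f, x, Iv f, Iv e] = Pw [Pw [e, f], x, Iv f, Iv e]" by auto
  from assoc[of "[Pw [e, f], x]" "[Iv f, Iv e]" "[]"] 1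
  have 2: "[Pw [e, f], x, Pw [Iv f, Iv e]] \<in> Dw" "Pw [Pw [e, f], x, Iv f, Iv e] = Pw [Pw [e, f], x, Pw [Iv f, Iv e]]" by auto
  from assoc[of "[e]" "[f, x, Iv f]" "[Iv e]"] W
  have 3: "Pw [e, f, x, Iv f, Iv e] = Pw [e, Pw [f, x, Iv f], Iv e]" by auto
  have ip: "Iv (Pw [e, f]) = Pw [Iv f, Iv e]" using I_prod NN_pair[OF e] by blast
  show ?thesis using 1 2 3 ip by (simp add: cj_def2)
qed

lemma cj_prod: "e \<in> NN \<Longrightarrow> f \<in> NN \<Longrightarrow> cj (Pw [e, f]) = cj e \<circ> cj f"
  using cj_prod_pt by (intro ext) auto

lemma prod_NN[simp]: assumes e: "e \<in> NN" and f: "f \<in> NN" shows "Pw [e, f] \<in> NN"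
  unfolding normalizer_def
proof (intro CollectI conjI allI ballI impI)
  fix x show "[Pw [e, f], x, Iv (Pw [e, f])] \<in> Dw" using cj_prod_pt[OF e f] by blast
next
  show "cj (Pw [e, f]) \<in> Aut" using cj_prod[OF e f] aut_comp NND(2) e f by simp
next
  fix w i assume w: "w \<in> Dw" and i: "i \<le> length w"
  let ?Wf = "nword M f i w"
  have Wf: "?Wf \<in> Dw" "Pw ?Wf = Pw (f # w)" using NND(3)[OF f w i] by auto
  have lWf: "length ?Wf = Suc (length w)" by (simp add: nword_def)
  have We: "nword M e (Suc i) ?Wf \<in> Dw" "Pw (nword M e (Suc i) ?Wf) = Pw (e # ?Wf)"
    using NND(3)[OF e Wf(1), of "Suc i"] lWf i by auto
  have eq: "nword M e (Suc i) ?Wf = map (cj e \<circ> cj f) (take i w) @ [cj e f, e] @ drop i w"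
    using i by (simp add: nword_def)
  have cef: "Pw [cj e f, e] = Pw [e, f]" using NND(3)[OF e single[of f], of 1] by (simp add: nword_def)
  from assoc[of "map (cj e \<circ> cj f) (take i w)" "[cj e f, e]" "drop i w"] We eq cef
  have 1: "map (cj e \<circ> cj f) (take i w) @ [Pw [e, f]] @ drop i w \<in> Dw"
     "Pw (nword M e (Suc i) ?Wf) = Pw (map (cj e \<circ> cj f) (take i w) @ [Pw [e, f]] @ drop i w)" by auto
  have nw: "nword M (Pw [e, f]) i w = map (cj e \<circ> cj f) (take i w) @ [Pw [e, f]] @ drop i w"
    using cj_prod[OF e f] by (simp add: nword_def)
  show "nword M (Pw [e, f]) i w \<in> Dw" using 1 nw by simp
  have efw: "e # f # w \<in> Dw" using cons_dom[OF e] cons_dom[OF f] w by blast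
  have "Pw (e # ?Wf) = Pw [e, Pw ?Wf]" using P_cons cons_dom[OF e Wf(1)] by blast
  also have "\<dots> = Pw [e, Pw (f # w)]" using Wf by simp
  also have "\<dots> = Pw (e # f # w)" using P_cons efw by metis
  also have "\<dots> = Pw (Pw [e, f] # w)" using assoc[of "[]" "[e, f]" w] efw by simp
  finally show "Pw (nword M (Pw [e, f]) i w) = Pw (nword M (Pw [e, f]) 0 w)"
    using 1 nw We by simp
qed

lemma iw_drop_iw: "iw (drop i (iw z)) = take (length z - i) z"
  by (simp add: iw_def drop_rev rev_map[symmetric] take_map[symmetric] map_map o_def del: rev_map)
lemma iw_take_iw: "iw (take i (iw z)) = drop (length z - i) z"
  by (simp add: iw_def take_rev rev_map[symmetric] drop_map[symmetric] map_map o_def del: rev_map)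

lemma cj_I: assumes e: "e \<in> NN" shows "cj (Iv e) = inv (cj e)"
proof (rule aut_ext_inv[OF NND(2)[OF e]])
  fix x
  have "[x, e] \<in> Dw" using snoc_dom[OF e, of "[x]"] by simp
  hence "[Iv e, x, e] \<in> Dw" using cons_I_dom[OF e] by simp
  hence "[Iv e, x, e, Iv e] \<in> Dw" using snoc_I_dom[OF e, of "[Iv e, x, e]"] by simp
  hence V: "[e, Iv e, x, e, Iv e] \<in> Dw" using cons_dom[OF e] by simp
  from assoc[of "[e]" "[Iv e, x, e]" "[Iv e]"] V
  have 1: "Pw [e, Iv e, x, e, Iv e] = cj e (cj (Iv e) x)" by (simp add: cj_def2)
  from assoc[of "[]" "[e, Iv e]" "[x, e, Iv e]"] V inv_r[of e]
  have 2: "[un, x, e, Iv e] \<in> Dw" "Pw [e, Iv e, x, e, Iv e] = Pw [un, x, e, Iv e]" by auto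
  from assoc[of "[un, x]" "[e, Iv e]" "[]"] 2(1) inv_r[of e]
  have 3: "Pw [un, x, e, Iv e] = Pw [un, x, un]" by auto
  have 4: "Pw [un, x, un] = x" using unit_ins[of "[]" "[x, un]"] by simp
  show "cj e (cj (Iv e) x) = x" using 1 2 3 4 by simp
qed

lemma I_NN[simp]: assumes e: "e \<in> NN" shows "Iv e \<in> NN"
  unfolding normalizer_def
proof (intro CollectI conjI allI ballI impI)
  fix x show "[Iv e, x, Iv (Iv e)] \<in> Dw" using cons_I_dom[OF e] snoc_dom[OF e, of "[x]"] by simp
next
  show "cj (Iv e) \<in> Aut" using cj_I[OF e] aut_inv NND(2)[OF e] by simp
next
  fix z j assume z: "z \<in> Dw" and j: "j \<le> length z"
  define n where "n = length z"
  define w where "w = iw z"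
  define i where "i = n - j"
  define y where "y = map (inv (cj e)) w"
  have ce: "cj e \<in> Aut" using NND(2)[OF e] .
  have w: "w \<in> Dw" using z by (simp add: w_def)
  have y: "y \<in> Dw" using autD(2)[OF aut_inv[OF ce], of w] w by (simp add: y_def)
  have ly: "length y = n" by (simp add: y_def w_def n_def)
  have i: "i \<le> length y" using ly by (simp add: i_def)
  have N1: "nword M e i y \<in> Dw" "Pw (nword M e i y) = Pw (e # y)" using NND(3)[OF e y i] by auto
  have eq1: "nword M e i y = take i w @ [e] @ map (inv (cj e)) (drop i w)"
    using ce by (simp add: nword_def y_def take_map[symmetric] drop_map)
  have "iw (nword M e i y) = map (inv (cj e)) (iw (drop i w)) @ [Iv e] @ iw (take i w)"
    using eq1 aut_iw[OF aut_inv[OF ce]] by simp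
  also have "\<dots> = nword M (Iv e) j z"
    using iw_drop_iw[of i z] iw_take_iw[of i z] j cj_I[OF e]
    by (simp add: w_def i_def n_def nword_def)
  finally have eq2: "iw (nword M e i y) = nword M (Iv e) j z" .
  show "nword M (Iv e) j z \<in> Dw" using eq2 N1 by (metis iw_dom)
  have "Pw (nword M (Iv e) j z) = Iv (Pw (e # y))" using eq2 N1 P_iw by metis
  also have "nword M e n y = w @ [e]" using ce ly by (simp add: nword_def y_def)
  hence "Pw (e # y) = Pw (w @ [e])" using NND(3)[OF e y, of n] ly by simp
  also have "Iv (Pw (w @ [e])) = Pw (Iv e # z)" using P_iw[OF snoc_dom[OF e w]] by (simp add: w_def)
  finally show "Pw (nword M (Iv e) j z) = Pw (nword M (Iv e) 0 z)" by simp
qed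

end

context pgrp begin

lemma gassoc: "a \<in> NN \<Longrightarrow> b \<in> NN \<Longrightarrow> Pw [Pw [a, b], c] = Pw [a, Pw [b, c]]"
proof -
  assume a: "a \<in> NN" and b: "b \<in> NN"
  have W: "[a, b, c] \<in> Dw" using cons_dom[OF a] NN_pair[OF b] by simp
  from assoc[of "[]" "[a, b]" "[c]"] W have 1: "Pw [a, b, c] = Pw [Pw [a, b], c]" by simp
  from assoc[of "[a]" "[b, c]" "[]"] W have 2: "Pw [a, b, c] = Pw [a, Pw [b, c]]" by simp
  show ?thesis using 1 2 by simp
qed

lemma gcancel1[simp]: "a \<in> NN \<Longrightarrow> Pw [Iv a, Pw [a, x]] = x"
  using cancel_l[OF NN_pair] by metis
lemma gcancel2[simp]: "a \<in> NN \<Longrightarrow> Pw [a, Pw [Iv a, x]] = x"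
  using cancel_l[OF NN_pair[OF I_NN], of a x] by simp
lemma ginv_l[simp]: "Pw [Iv x, x] = un" using inv_l by blast
lemma ginv_r[simp]: "Pw [x, Iv x] = un" using inv_r by blast
lemma gI_prod[simp]: "a \<in> NN \<Longrightarrow> Iv (Pw [a, b]) = Pw [Iv b, Iv a]"
  using I_prod NN_pair by blast

lemma cj_N: "a \<in> NN \<Longrightarrow> cj a x = Pw [a, Pw [x, Iv a]]"
  using assoc[of "[a]" "[x, Iv a]" "[]"] NND(1)[of a x] by (simp add: cj_def2)

lemma aut_NN[simp]: assumes f: "f \<in> Aut" and e: "e \<in> NN" shows "f e \<in> NN"
  unfolding normalizer_def
proof (intro CollectI conjI allI ballI impI)
  have p: "[f e, x, Iv (f e)] = map f [e, inv f x, Iv e]" for x using f by (simp add: aut_I)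
  fix x show "[f e, x, Iv (f e)] \<in> Dw" using p autD(2)[OF f] NND(1)[OF e] by metis
next
  have "cj (f e) x = f (cj e (inv f x))" for x
  proof -
    have "cj (f e) x = Pw (map f [e, inv f x, Iv e])" using f by (simp add: aut_I cj_def2)
    also have "\<dots> = f (cj e (inv f x))" using autD(3)[OF f NND(1)[OF e]] by (simp add: cj_def2)
    finally show ?thesis .
  qed
  hence cjf: "cj (f e) = f \<circ> cj e \<circ> inv f" by auto
  thus "cj (f e) \<in> Aut" using aut_comp aut_inv f NND(2)[OF e] by simp
  fix w i assume w: "w \<in> Dw" and i: "i \<le> length w"
  let ?v = "map (inv f) w"
  have v: "?v \<in> Dw" using autD(2)[OF aut_inv[OF f]] w by simp
  have eq: "nword M (f e) i w = map f (nword M e i ?v)"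
    using cjf f by (simp add: nword_def take_map drop_map)
  have N: "nword M e i ?v \<in> Dw" "Pw (nword M e i ?v) = Pw (e # ?v)" using NND(3)[OF e v] i by auto
  show "nword M (f e) i w \<in> Dw" using eq N autD(2)[OF f] by metis
  have "Pw (nword M (f e) i w) = f (Pw (e # ?v))" using eq N autD(3)[OF f] by metis
  also have "\<dots> = Pw (f e # w)" using autD(3)[OF f cons_dom[OF e v]] f by simp
  finally show "Pw (nword M (f e) i w) = Pw (nword M (f e) 0 w)" by simp
qed

lemma aut_hom_N: "f \<in> Aut \<Longrightarrow> a \<in> NN \<Longrightarrow> f (Pw [a, b]) = Pw [f a, f b]"
  using aut_hom2 NN_pair by blast

lemma face_len: "0 < length u \<Longrightarrow> i \<le> length u \<Longrightarrow> length (pg_face M i u) = length u - 1"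
  by (auto simp: pg_face_def)

lemma face_nth: assumes "i \<le> length u" "j < length u - 1"
  shows "pg_face M i u ! j = (if i = 0 then u ! Suc j else if j < i - 1 then u ! j
     else if j = i - 1 then Pw [u ! j, u ! Suc j] else u ! Suc j)"
  using assms by (auto simp: pg_face_def nth_append nth_tl nth_butlast min_def)

lemma degen_len[simp]: "i \<le> length u \<Longrightarrow> length (pg_degen M i u) = Suc (length u)"
  by (simp add: pg_degen_def)

lemma degen_nth: assumes "i \<le> length u" "j \<le> length u"
  shows "pg_degen M i u ! j = (if j < i then u ! j else if j = i then un else u ! (j - 1))"
  using assms by (auto simp: pg_degen_def nth_append min_def)

lemma adj_dom: assumes "w \<in> Dw" "Suc j < length w" shows "[w ! j, w ! Suc j] \<in> Dw"
proof -
  have "w = take j w @ [w ! j, w ! Suc j] @ drop (Suc (Suc j)) w"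
    using assms(2) by (metis Cons_nth_drop_Suc Suc_lessD append_Cons append_Nil append_take_drop_id)
  thus ?thesis using mid_dom assms(1) by metis
qed

end

context pgrp begin

lemma amor_D: assumes "aut_mor M Phi e Psi"
  shows "Phi \<in> Aut" "Psi \<in> Aut" "e \<in> NN" "Phi = cj e \<circ> Psi"
proof -
  show A: "Phi \<in> Aut" "Psi \<in> Aut" and e: "e \<in> NN" using assms unfolding aut_mor_def by auto
  obtain F where H: "pg_homotopy M F" and F0: "\<forall>w\<in>Dw. F w (Suc (length w)) = map Phi w"
    and F1: "\<forall>w\<in>Dw. F w 0 = map Psi w" and Fe: "F [un] 1 = [e]"
    using assms unfolding aut_mor_def by blast
  have Hd: "\<And>w k. w \<in> Dw \<Longrightarrow> k \<le> Suc (length w) \<Longrightarrow> F w k \<in> Dw \<and> length (F w k) = length w"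
   and Hf: "\<And>w k i. w \<in> Dw \<Longrightarrow> k \<le> Suc (length w) \<Longrightarrow> i \<le> length w \<Longrightarrow> 0 < length w \<Longrightarrow>
        F (pg_face M i w) (d1_face i k) = pg_face M i (F w k)"
    using H unfolding pg_homotopy_def by blast+
  show "Phi = cj e \<circ> Psi"
  proof (rule ext)
    fix x
    have x1: "[x, un] \<in> Dw" by simp
    obtain a b where ab: "F [x, un] 2 = [a, b]" "[a, b] \<in> Dw"
      using Hd[OF x1, of 2] by (cases "F [x, un] 2" rule: list.exhaust; cases "tl (F [x, un] 2)"; auto)
    have "F [x] 2 = [a]" using Hf[OF x1, of 2 2] ab by (simp add: pg_face_def d1_face_def)
    hence a: "a = Phi x" using F0[rule_format, OF single[of x]] by (simp add: numeral_2_eq_2)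
    have "F [un] 1 = [b]" using Hf[OF x1, of 2 0] ab by (simp add: pg_face_def d1_face_def)
    hence b: "b = e" using Fe by simp
    have Fx: "F [x] 1 = [Pw [Phi x, e]]" using Hf[OF x1, of 2 1] ab a b by (simp add: pg_face_def d1_face_def)
    have x2: "[un, x] \<in> Dw" by simp
    obtain c d where cd: "F [un, x] 1 = [c, d]" "[c, d] \<in> Dw"
      using Hd[OF x2, of 1] by (cases "F [un, x] 1" rule: list.exhaust; cases "tl (F [un, x] 1)"; auto)
    have "F [un] 1 = [c]" using Hf[OF x2, of 1 2] cd by (simp add: pg_face_def d1_face_def)
    hence c: "c = e" using Fe by simp
    have "F [x] 0 = [d]" using Hf[OF x2, of 1 0] cd by (simp add: pg_face_def d1_face_def)
    hence d: "d = Psi x" using F1[rule_format, OF single[of x]] by simp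
    have "F [x] 1 = [Pw [e, Psi x]]" using Hf[OF x2, of 1 1] cd c d by (simp add: pg_face_def d1_face_def)
    with Fx have eq: "Pw [Phi x, e] = Pw [e, Psi x]" by simp
    have W: "[Phi x, e, Iv e] \<in> Dw" using snoc_I_dom[OF e, of "[Phi x, e]"] snoc_dom[OF e, of "[Phi x]"] by simp
    have "cj e (Psi x) = Pw [Pw [e, Psi x], Iv e]"
      using assoc[of "[]" "[e, Psi x]" "[Iv e]"] NND(1)[OF e] by (simp add: cj_def2)
    also have "\<dots> = Pw [Pw [Phi x, e], Iv e]" using eq by simp
    also have "\<dots> = Pw [Phi x, e, Iv e]" using assoc[of "[]" "[Phi x, e]" "[Iv e]"] W by simp
    also have "\<dots> = Pw [Phi x, Pw [e, Iv e]]" using assoc[of "[Phi x]" "[e, Iv e]" "[]"] W by simp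
    finally show "Phi x = (cj e \<circ> Psi) x" by simp
  qed
qed

definition Fh :: "('a \<Rightarrow> 'a) \<Rightarrow> 'a \<Rightarrow> ('a \<Rightarrow> 'a) \<Rightarrow> 'a list \<Rightarrow> nat \<Rightarrow> 'a list" where
  "Fh Phi e Psi w k = map (\<lambda>j. if Suc j < k then Phi (w ! j) else if Suc j = k then Pw [Phi (w ! j), e]
      else Psi (w ! j)) [0..<length w]"

lemma Fh_len[simp]: "length (Fh Phi e Psi w k) = length w" by (simp add: Fh_def)
lemma Fh_nth: "j < length w \<Longrightarrow> Fh Phi e Psi w k ! j = (if Suc j < k then Phi (w ! j) else if Suc j = k then Pw [Phi (w ! j), e]
      else Psi (w ! j))" by (simp add: Fh_def)

lemma Fh_mid: assumes "1 \<le> k" "k \<le> length w"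
  shows "Fh Phi e Psi w k = take (k - 1) (map Phi w) @ [Pw [Phi (w ! (k - 1)), e]] @ drop k (map Psi w)"
  using assms by (intro nth_equalityI) (auto simp: Fh_nth nth_append min_def)

lemma Fh_top: "Fh Phi e Psi w (Suc (length w)) = map Phi w"
  by (intro nth_equalityI) (auto simp: Fh_nth)
lemma Fh_bot: "Fh Phi e Psi w 0 = map Psi w"
  by (intro nth_equalityI) (auto simp: Fh_nth)



lemma S_lem: assumes A: "Phi \<in> Aut" "Psi \<in> Aut" and e: "e \<in> NN" and c: "Phi = cj e \<circ> Psi"
    and xy: "[x, y] \<in> Dw"
  shows "Pw [Phi (Pw [x, y]), e] = Pw [Phi x, Pw [Phi y, e]] \<and>
      Pw [Phi (Pw [x, y]), e] = Pw [Pw [Phi x, e], Psi y]"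
proof -
    have p: "[Psi x, Psi y] \<in> Dw" using autD(2)[OF A(2), of "[x,y]"] xy by simp
    have V: "[Phi x, Phi y, e] \<in> Dw" "Pw [Phi x, Phi y, e] = Pw [e, Psi x, Psi y]"
      using NND(3)[OF e p, of 2] c by (auto simp: nword_def numeral_2_eq_2)
    have V1: "[Phi x, e, Psi y] \<in> Dw" "Pw [Phi x, e, Psi y] = Pw [e, Psi x, Psi y]"
      using NND(3)[OF e p, of 1] c by (auto simp: nword_def)
    have "Pw [Phi (Pw [x, y]), e] = Pw [Pw [Phi x, Phi y], e]" using aut_hom2[OF A(1) xy] by simp
    also have "\<dots> = Pw [Phi x, Phi y, e]" using assoc[of "[]" "[Phi x, Phi y]" "[e]"] V by simp
    finally have 1: "Pw [Phi (Pw [x, y]), e] = Pw [Phi x, Phi y, e]" .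
    have 2: "Pw [Phi x, Phi y, e] = Pw [Phi x, Pw [Phi y, e]]" using assoc[of "[Phi x]" "[Phi y, e]" "[]"] V by simp
    have 3: "Pw [Phi x, e, Psi y] = Pw [Pw [Phi x, e], Psi y]" using assoc[of "[]" "[Phi x, e]" "[Psi y]"] V1 by simp
    show ?thesis using 1 2 3 V V1 by simp
qed

lemma Fh_face: assumes A: "Phi \<in> Aut" "Psi \<in> Aut" and e: "e \<in> NN" and c: "Phi = cj e \<circ> Psi"
  and w: "w \<in> Dw" and k: "k \<le> Suc (length w)" and i: "i \<le> length w" and n: "0 < length w"
  shows "Fh Phi e Psi (pg_face M i w) (d1_face i k) = pg_face M i (Fh Phi e Psi w k)"
proof (rule nth_equalityI)
  let ?F = "Fh Phi e Psi"
  have lw': "length (pg_face M i w) = length w - 1" using face_len[of w i] i n by simp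
  have lF: "length (pg_face M i (?F w k)) = length w - 1" using face_len[of "?F w k" i] i n by simp
  show "length (?F (pg_face M i w) (d1_face i k)) = length (pg_face M i (?F w k))"
    using lw' lF by simp
  fix j assume "j < length (?F (pg_face M i w) (d1_face i k))"
  hence j: "j < length w - 1" using lw' by simp
  have adj: "[w ! j, w ! Suc j] \<in> Dw" using adj_dom[OF w] j by simp
  note h = aut_hom2[OF A(1) adj] aut_hom2[OF A(2) adj] S_lem[OF A e c adj]
  define k' where "k' = d1_face i k"
  have k'v: "k' = (if i < k then k - 1 else k)" by (simp add: k'_def d1_face_def)
  define x where "x = pg_face M i w ! j"
  have L: "?F (pg_face M i w) k' ! j = (if Suc j < k' then Phi x
     else if Suc j = k' then Pw [Phi x, e] else Psi x)"
    using Fh_nth[of j "pg_face M i w"] lw' j by (simp add: x_def)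
  have R: "pg_face M i (?F w k) ! j = (if i = 0 then ?F w k ! Suc j else if j < i - 1 then ?F w k ! j
     else if j = i - 1 then Pw [?F w k ! j, ?F w k ! Suc j] else ?F w k ! Suc j)"
    using face_nth[of i "?F w k" j] i j by simp
  have W: "x = (if i = 0 then w ! Suc j else if j < i - 1 then w ! j
     else if j = i - 1 then Pw [w ! j, w ! Suc j] else w ! Suc j)"
    using face_nth[of i w j] i j by (simp add: x_def)
  have F0: "?F w k ! j = (if Suc j < k then Phi (w ! j) else if Suc j = k then Pw [Phi (w ! j), e]
      else Psi (w ! j))" using Fh_nth[of j w] j by simp
  have F1: "?F w k ! Suc j = (if Suc (Suc j) < k then Phi (w ! Suc j) else if Suc (Suc j) = k then Pw [Phi (w ! Suc j), e]
      else Psi (w ! Suc j))" using Fh_nth[of "Suc j" w] j by simp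
  have G: "(if Suc j < k' then Phi x else if Suc j = k' then Pw [Phi x, e] else Psi x) =
    (if i = 0 then ?F w k ! Suc j else if j < i - 1 then ?F w k ! j
     else if j = i - 1 then Pw [?F w k ! j, ?F w k ! Suc j] else ?F w k ! Suc j)"
  proof (cases "i = 0")
    case True thus ?thesis using W F1 k'v by auto
  next
    case False
    consider "j < i - 1" | "j = i - 1" | "i - 1 < j" by linarith
    thus ?thesis
    proof cases
      case 1 thus ?thesis using False W F0 k'v by auto
    next
      case 2
      consider "Suc i < k" | "Suc i = k" | "i = k" | "k < i" by linarith
      thus ?thesis using False W F0 F1 h 2 k'v by cases auto
    next
      case 3 thus ?thesis using False W F1 k'v by auto
    qed
  qed
  show "?F (pg_face M i w) (d1_face i k) ! j = pg_face M i (?F w k) ! j"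
    using G L R unfolding k'_def by simp
qed

lemma Fh_degen: assumes A: "Phi \<in> Aut" "Psi \<in> Aut"
  and k: "k \<le> Suc (length w)" and i: "i \<le> length w"
  shows "Fh Phi e Psi (pg_degen M i w) (d1_degen i k) = pg_degen M i (Fh Phi e Psi w k)"
proof (rule nth_equalityI)
  let ?F = "Fh Phi e Psi"
  show "length (?F (pg_degen M i w) (d1_degen i k)) = length (pg_degen M i (?F w k))" using i by simp
  fix j assume "j < length (?F (pg_degen M i w) (d1_degen i k))"
  hence j: "j \<le> length w" using i by simp
  have u: "Phi un = un" "Psi un = un" using aut_un A by auto
  have L: "?F (pg_degen M i w) (d1_degen i k) ! j = (if Suc j < d1_degen i k then Phi (pg_degen M i w ! j)
     else if Suc j = d1_degen i k then Pw [Phi (pg_degen M i w ! j), e] else Psi (pg_degen M i w ! j))"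
    using Fh_nth[of j "pg_degen M i w"] i j by simp
  have R: "pg_degen M i (?F w k) ! j = (if j < i then ?F w k ! j else if j = i then un else ?F w k ! (j - 1))"
    using degen_nth[of i "?F w k" j] i j by simp
  have W: "pg_degen M i w ! j = (if j < i then w ! j else if j = i then un else w ! (j - 1))"
    using degen_nth[of i w j] i j by simp
  consider "j < i" | "j = i" | "i < j" by linarith
  thus "?F (pg_degen M i w) (d1_degen i k) ! j = pg_degen M i (?F w k) ! j"
  proof cases
    case 1 thus ?thesis using L R W Fh_nth[of j w] i by (auto simp: d1_degen_def)
  next
    case 2 thus ?thesis using L R W u by (auto simp: d1_degen_def)
  next
    case 3 thus ?thesis using L R W Fh_nth[of "j - 1" w] j by (auto simp: d1_degen_def)
  qed
qed

lemma amor_I: assumes A: "Phi \<in> Aut" "Psi \<in> Aut" and e: "e \<in> NN" and c: "Phi = cj e \<circ> Psi"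
  shows "aut_mor M Phi e Psi"
proof -
  let ?F = "Fh Phi e Psi"
  have u: "Phi un = un" "Psi un = un" using aut_un A by auto
  have H1: "?F w k \<in> Dw \<and> length (?F w k) = length w" if w: "w \<in> Dw" and k: "k \<le> Suc (length w)" for w k
  proof (cases "k = 0 \<or> k = Suc (length w)")
    case True thus ?thesis using Fh_top Fh_bot autD(2)[OF A(1)] autD(2)[OF A(2)] w by auto
  next
    case False
    hence k1: "1 \<le> k" "k \<le> length w" using k by auto
    have nw: "nword M e k (map Psi w) = map Phi (take k w) @ [e] @ drop k (map Psi w)"
      using c by (simp add: nword_def take_map)
    have "map Psi w \<in> Dw" using autD(2)[OF A(2)] w by simp
    hence "nword M e k (map Psi w) \<in> Dw" using NND(3)[OF e] k1 by simp
    moreover have "take k w = take (k - 1) w @ [w ! (k - 1)]" using k1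
      by (metis Suc_diff_1 diff_less less_le_trans zero_less_one take_Suc_conv_app_nth)
    ultimately have "take (k - 1) (map Phi w) @ [Phi (w ! (k - 1)), e] @ drop k (map Psi w) \<in> Dw"
      using nw by (simp add: take_map)
    from assoc[OF this] have "?F w k \<in> Dw" using Fh_mid[OF k1] by simp
    thus ?thesis by simp
  qed
  have "pg_homotopy M ?F" unfolding pg_homotopy_def using H1 Fh_face[OF A e c] Fh_degen[OF A] by blast
  moreover have "?F [un] 1 = [e]" using u by (simp add: Fh_def)
  ultimately show ?thesis unfolding aut_mor_def using A e Fh_top Fh_bot by blast
qed

lemma amor_iff: "aut_mor M Phi e Psi \<longleftrightarrow> Phi \<in> Aut \<and> Psi \<in> Aut \<and> e \<in> NN \<and> Phi = cj e \<circ> Psi"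
  using amor_D amor_I by blast

end

locale tw = G: pgrp M2 + H: pgrp M1 for M2 :: "'a partial_group" and M1 :: "'b partial_group"
begin

lemma TFD: assumes "twisting_function M2 M1 phi" "b \<in> G.Dw" "length b = n" "1 \<le> n"
  shows "nerve_simplex M1 (n - 1) (phi n b)"
    "\<And>i. 2 \<le> i \<Longrightarrow> i \<le> n \<Longrightarrow> phi (n - 1) (pg_face M2 i b) = nerve_face M1 (i - 1) (phi n b)"
    "2 \<le> n \<Longrightarrow> phi (n - 1) (pg_face M2 1 b) =
           nerve_mult M1 (nerve_face M1 0 (phi n b)) (phi (n - 1) (pg_face M2 0 b))"
    "\<And>i. 1 \<le> i \<Longrightarrow> i \<le> n \<Longrightarrow> phi (Suc n) (pg_degen M2 i b) = nerve_degen M1 (i - 1) (phi n b)"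
    "phi (Suc n) (pg_degen M2 0 b) = nerve_unit M1 n"
  using assms unfolding twisting_function_def by blast+

lemma NSD: assumes "nerve_simplex M1 n s"
  shows "length (fst s) = Suc n" "length (snd s) = n" "\<And>f. f \<in> set (fst s) \<Longrightarrow> f \<in> H.Aut"
    "\<And>i. i < n \<Longrightarrow> aut_mor M1 (fst s ! i) (snd s ! i) (fst s ! Suc i)"
  using assms unfolding nerve_simplex_def by auto

lemma len1: "length l = 1 \<Longrightarrow> l = [hd l]" by (cases l) auto
lemma len2: "length l = 2 \<Longrightarrow> l = [l ! 0, l ! 1]" by (cases l; cases "tl l") (auto simp: numeral_2_eq_2)
lemma len3: "length l = 3 \<Longrightarrow> l = [l ! 0, l ! 1, l ! 2]"
  by (cases l; cases "tl l"; cases "tl (tl l)") (auto simp: numeral_3_eq_3 numeral_2_eq_2)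

lemma pair_dom3: assumes "[g, h, k] \<in> G.Dw"
  shows "[g, h] \<in> G.Dw" "[h, k] \<in> G.Dw" "[g, G.Pw [h, k]] \<in> G.Dw" "[G.Pw [g, h], k] \<in> G.Dw"
  using G.pre_dom[of "[g,h]" "[k]"] G.suf_dom[of "[g]" "[h,k]"] G.assoc[of "[g]" "[h,k]" "[]"]
    G.assoc[of "[]" "[g,h]" "[k]"] assms by auto

lemma tf_to_pair: assumes tf: "twisting_function M2 M1 phi"
  shows "\<exists>t eta. twisting_pair M2 M1 t eta \<and> low_values M2 M1 t eta phi"
proof -
  define t where "t g = hd (fst (phi 1 [g]))" for g
  define eta where "eta g h = hd (snd (phi 2 [g, h]))" for g h
  have p1: "phi 1 [g] = ([t g], [])" for g
  proof -
    have "nerve_simplex M1 0 (phi 1 [g])" using TFD(1)[OF tf, of "[g]" 1] by simp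
    from NSD(1,2)[OF this] show ?thesis using len1[of "fst (phi 1 [g])"] by (simp add: t_def prod_eq_iff)
  qed
  have tA: "t g \<in> H.Aut" for g
    using NSD(3)[OF TFD(1)[OF tf, of "[g]" 1]] p1 by simp
  have p2: "phi 2 [g, h] = ([t g, t (G.Pw [g, h]) \<circ> inv (t h)], [eta g h])" if gh: "[g, h] \<in> G.Dw" for g h
  proof -
    let ?s = "phi 2 [g, h]"
    have ns: "nerve_simplex M1 1 ?s" using TFD(1)[OF tf gh, of 2] by simp
    obtain a0 a1 where f: "fst ?s = [a0, a1]" using len2[of "fst ?s"] NSD(1)[OF ns] by auto
    have f2: "snd ?s = [eta g h]" using len1[of "snd ?s"] NSD(2)[OF ns] by (auto simp: eta_def)
    have "phi 1 [g] = nerve_face M1 1 ?s" using TFD(2)[OF tf gh, of 2 2] by (simp add: pg_face_def)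
    hence 0: "a0 = t g" using p1 f by (simp add: nerve_face_def)
    have "phi 1 [G.Pw [g, h]] = nerve_mult M1 (nerve_face M1 0 ?s) (phi 1 [h])"
      using TFD(3)[OF tf gh, of 2] by (simp add: pg_face_def)
    hence "t (G.Pw [g, h]) = a1 \<circ> t h" using p1 f f2
      by (simp add: nerve_face_def nerve_mult_def)
    hence "t (G.Pw [g, h]) \<circ> inv (t h) = a1" using tA[of h] by (simp add: comp_assoc)
    thus ?thesis using f f2 0 by (simp add: prod_eq_iff)
  qed
  have lv: "low_values M2 M1 t eta phi" unfolding low_values_def using p1 p2 by blast
  have amor: "aut_mor M1 (t g) (eta g h) (t (G.Pw [g, h]) \<circ> inv (t h))" if gh: "[g, h] \<in> G.Dw" for g h
    using NSD(4)[OF TFD(1)[OF tf gh, of 2], of 0] p2[OF gh] by simp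
  have etaN: "eta g h \<in> H.NN" if gh: "[g, h] \<in> G.Dw" for g h using H.amor_D(3)[OF amor[OF gh]] .
  have u11: "phi 2 [G.un, g] = nerve_unit M1 1" for g
    using TFD(5)[OF tf G.single[of g], of 1] by (simp add: pg_degen_def numeral_2_eq_2)
  have t1: "t G.un = id" using u11[of G.un] p2[of G.un G.un] by (simp add: nerve_unit_def)
  have e1: "eta G.un g = H.un" for g using u11[of g] p2[of G.un g] by (simp add: nerve_unit_def)
  have e2: "eta g G.un = H.un" for g
    using TFD(4)[OF tf G.single[of g], of 1 1] p2[of g G.un] p1[of g] G.unit_r_dom[of g]
    by (simp add: pg_degen_def nerve_degen_def numeral_2_eq_2)
  have coc: "H.Pw [t g (eta h k), eta g (G.Pw [h, k])] = H.Pw [eta g h, eta (G.Pw [g, h]) k]"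
    if b: "[g, h, k] \<in> G.Dw" for g h k
  proof -
    let ?s = "phi 3 [g, h, k]"
    have ns: "nerve_simplex M1 2 ?s" using TFD(1)[OF tf b, of 3] by simp
    obtain F0 F1 F2 where f: "fst ?s = [F0, F1, F2]" using len3[of "fst ?s"] NSD(1)[OF ns] by auto
    obtain e1 e2 where f2: "snd ?s = [e1, e2]" using len2[of "snd ?s"] NSD(2)[OF ns] by auto
    note d = pair_dom3[OF b]
    have "phi 2 [g, h] = nerve_face M1 2 ?s" using TFD(2)[OF tf b, of 3 3] by (simp add: pg_face_def)
    hence A: "F0 = t g" "F1 = t (G.Pw [g, h]) \<circ> inv (t h)" "e1 = eta g h"
      using p2[OF d(1)] f f2 by (simp_all add: nerve_face_def pg_face_def)
    have "phi 2 [g, G.Pw [h, k]] = nerve_face M1 1 ?s" using TFD(2)[OF tf b, of 3 2] by (simp add: pg_face_def)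
    hence B: "eta g (G.Pw [h, k]) = H.Pw [e1, e2]"
      using p2[OF d(3)] f f2 by (simp add: nerve_face_def pg_face_def)
    have "phi 2 [G.Pw [g, h], k] = nerve_mult M1 (nerve_face M1 0 ?s) (phi 2 [h, k])"
      using TFD(3)[OF tf b, of 3] by (simp add: pg_face_def)
    hence C: "eta (G.Pw [g, h]) k = H.Pw [F1 (eta h k), e2]"
      using p2[OF d(4)] p2[OF d(2)] f f2 by (simp add: nerve_face_def nerve_mult_def pg_face_def)
    have m0: "aut_mor M1 F0 e1 F1" using NSD(4)[OF ns, of 0] f f2 by simp
    have m1: "aut_mor M1 F1 e2 F2" using NSD(4)[OF ns, of 1] f f2 by simp
    note x0 = H.amor_D[OF m0] and x1 = H.amor_D[OF m1]
    have aN: "eta h k \<in> H.NN" using etaN[OF d(2)] .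
    have n: "e1 \<in> H.NN" "e2 \<in> H.NN" "F1 \<in> H.Aut" "F1 (eta h k) \<in> H.NN"
      using x0(3) x1(3) x0(2) H.aut_NN[OF x0(2) aN] by auto
    have "t g (eta h k) = H.cj e1 (F1 (eta h k))" using x0(4) A(1) by simp
    also have "\<dots> = H.Pw [e1, H.Pw [F1 (eta h k), H.Iv e1]]" using H.cj_N n by blast
    finally have tg: "t g (eta h k) = H.Pw [e1, H.Pw [F1 (eta h k), H.Iv e1]]" .
    show ?thesis unfolding tg B C A(3)[symmetric]
      using n by (simp add: H.gassoc)
  qed
  have "twisting_pair M2 M1 t eta" unfolding twisting_pair_def
    using tA etaN amor t1 e1 e2 coc by blast
  thus ?thesis using lv by blast
qed

end

context pgrp begin
lemma face_dom: assumes w: "w \<in> Dw" and i: "i \<le> length w" shows "pg_face M i w \<in> Dw"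
proof -
  consider "i = 0" | "i = length w" | "0 < i" "i < length w" using i by linarith
  thus ?thesis
  proof cases
    case 1 thus ?thesis using w suf_dom[of "[hd w]" "tl w"] by (cases w) (auto simp: pg_face_def)
  next
    case 2 thus ?thesis using w pre_dom[of "butlast w" "[last w]"]
      by (cases "w = []") (auto simp: pg_face_def)
  next
    case 3
    have a: "w = take (i - 1) w @ w ! (i - 1) # drop (Suc (i - 1)) w" using id_take_nth_drop[of "i - 1" w] 3 by simp
    have b: "drop i w = w ! i # drop (Suc i) w" using Cons_nth_drop_Suc[of i w] 3 by simp
    have "w = take (i - 1) w @ [w ! (i - 1), w ! i] @ drop (Suc i) w" using a b 3 by simp
    hence "take (i - 1) w @ [w ! (i - 1), w ! i] @ drop (Suc i) w \<in> Dw" using w by simp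
    hence "take (i - 1) w @ [Pw [w ! (i - 1), w ! i]] @ drop (Suc i) w \<in> Dw" using assoc by blast
    thus ?thesis using 3 by (simp add: pg_face_def)
  qed
qed
end

context tw begin

lemma tf_unique: assumes tf1: "twisting_function M2 M1 phi" and tf2: "twisting_function M2 M1 psi"
  and l1: "\<And>g. psi 1 [g] = phi 1 [g]" and l2: "\<And>g h. [g, h] \<in> G.Dw \<Longrightarrow> psi 2 [g, h] = phi 2 [g, h]"
  shows "1 \<le> n \<Longrightarrow> b \<in> G.Dw \<Longrightarrow> length b = n \<Longrightarrow> psi n b = phi n b"
proof (induction n arbitrary: b rule: less_induct)
  case (less n)
  consider "n = 1" | "n = 2" | "3 \<le> n" using less.prems by linarith
  thus ?case
  proof cases
    case 1
    then obtain g where "b = [g]" using less.prems len1[of b] by auto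
    thus ?thesis using l1 1 by simp
  next
    case 2
    then obtain g h where "b = [g, h]" using less.prems len2[of b] by auto
    thus ?thesis using l2 2 less.prems by simp
  next
    case 3
    note b = less.prems(2,3)
    let ?s = "psi n b" and ?s' = "phi n b"
    have n1: "1 \<le> n" using 3 by simp
    have ns: "nerve_simplex M1 (n - 1) ?s" "nerve_simplex M1 (n - 1) ?s'"
      using TFD(1)[OF tf2 b n1] TFD(1)[OF tf1 b n1] by simp_all
    have IH: "psi (n - 1) c = phi (n - 1) c" if "c \<in> G.Dw" "length c = n - 1" for c
      using less.IH[of "n - 1" c] that 3 by simp
    have bn: "pg_face M2 n b \<in> G.Dw" "length (pg_face M2 n b) = n - 1"
      using G.face_dom[of b n] G.face_len[of b n] 3 b by simp_all
    have bn1: "pg_face M2 (n - 1) b \<in> G.Dw" "length (pg_face M2 (n - 1) b) = n - 1"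
      using G.face_dom[of b "n - 1"] G.face_len[of b "n - 1"] 3 b by simp_all
    have "psi (n - 1) (pg_face M2 n b) = nerve_face M1 (n - 1) ?s"
      using TFD(2)[OF tf2 b n1, of n] 3 by simp
    moreover have "phi (n - 1) (pg_face M2 n b) = nerve_face M1 (n - 1) ?s'"
      using TFD(2)[OF tf1 b n1, of n] 3 by simp
    ultimately have e1: "nerve_face M1 (n - 1) ?s = nerve_face M1 (n - 1) ?s'" using IH[OF bn] by simp
    have "psi (n - 1) (pg_face M2 (n - 1) b) = nerve_face M1 (n - 2) ?s"
      using TFD(2)[OF tf2 b n1, of "n - 1"] 3 by (simp add: numeral_2_eq_2)
    moreover have "phi (n - 1) (pg_face M2 (n - 1) b) = nerve_face M1 (n - 2) ?s'"
      using TFD(2)[OF tf1 b n1, of "n - 1"] 3 by (simp add: numeral_2_eq_2)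
    ultimately have e2: "nerve_face M1 (n - 2) ?s = nerve_face M1 (n - 2) ?s'" using IH[OF bn1] by simp
    have lf: "length (fst ?s) = n" "length (fst ?s') = n" "length (snd ?s) = n - 1" "length (snd ?s') = n - 1"
      using NSD(1,2)[OF ns(1)] NSD(1,2)[OF ns(2)] 3 by auto
    have sn: "Suc (n - 2) = n - 1" using 3 by arith
    have f1: "take (n - 1) (fst ?s) = take (n - 1) (fst ?s')" using arg_cong[OF e1, of fst] lf by (simp add: nerve_face_def)
    have "(take (n - 2) (fst ?s) @ drop (n - 1) (fst ?s)) ! (n - 2) = (take (n - 2) (fst ?s') @ drop (n - 1) (fst ?s')) ! (n - 2)"
      using arg_cong[OF e2, of "\<lambda>x. fst x ! (n - 2)"] sn by (simp add: nerve_face_def)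
    hence f2: "fst ?s ! (n - 1) = fst ?s' ! (n - 1)" using lf 3 by (simp add: nth_append)
    have ff: "fst ?s = fst ?s'"
    proof (rule nth_equalityI)
      show "length (fst ?s) = length (fst ?s')" using lf by simp
      fix j assume "j < length (fst ?s)"
      hence "j < n - 1 \<or> j = n - 1" using lf by auto
      thus "fst ?s ! j = fst ?s' ! j"
      proof
        assume j: "j < n - 1"
        have "take (n - 1) (fst ?s) ! j = take (n - 1) (fst ?s') ! j" using f1 by simp
        thus ?thesis using j by simp
      qed (use f2 in simp)
    qed
    have s1: "butlast (snd ?s) = butlast (snd ?s')" using arg_cong[OF e1, of snd] lf 3 by (simp add: nerve_face_def pg_face_def)
    have "pg_face M1 (n - 2) (snd ?s) ! (n - 3) = pg_face M1 (n - 2) (snd ?s') ! (n - 3)"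
      using arg_cong[OF e2, of "\<lambda>x. snd x ! (n - 3)"] by (simp add: nerve_face_def)
    hence s2: "H.Pw [snd ?s ! (n - 3), snd ?s ! (n - 2)] = H.Pw [snd ?s' ! (n - 3), snd ?s' ! (n - 2)]"
      using H.face_nth[of "n - 2" "snd ?s" "n - 3"] H.face_nth[of "n - 2" "snd ?s'" "n - 3"] lf 3
      by (simp add: numeral_3_eq_3 numeral_2_eq_2 Suc_diff_Suc)
    have "butlast (snd ?s) ! (n - 3) = butlast (snd ?s') ! (n - 3)" using s1 by simp
    hence s3: "snd ?s ! (n - 3) = snd ?s' ! (n - 3)" using lf 3 by (simp add: nth_butlast)
    have aN: "snd ?s ! (n - 3) \<in> H.NN"
      using H.amor_D(3)[OF NSD(4)[OF ns(1), of "n - 3"]] 3 by simp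
    have s4: "snd ?s ! (n - 2) = snd ?s' ! (n - 2)"
    proof -
      let ?a = "snd ?s ! (n - 3)" and ?x = "snd ?s ! (n - 2)" and ?x' = "snd ?s' ! (n - 2)"
      have "?x = H.Pw [H.Iv ?a, H.Pw [?a, ?x]]" using H.gcancel1[OF aN, of ?x] by simp
      also have "H.Pw [?a, ?x] = H.Pw [?a, ?x']" using s2 s3 by simp
      also have "H.Pw [H.Iv ?a, H.Pw [?a, ?x']] = ?x'" using H.gcancel1[OF aN, of ?x'] .
      finally show ?thesis .
    qed
    have sf: "snd ?s = snd ?s'"
    proof (rule nth_equalityI)
      show "length (snd ?s) = length (snd ?s')" using lf by simp
      fix j assume "j < length (snd ?s)"
      hence "j < n - 2 \<or> j = n - 2" using lf by auto
      thus "snd ?s ! j = snd ?s' ! j"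
      proof
        assume j: "j < n - 2"
        have "butlast (snd ?s) ! j = butlast (snd ?s') ! j" using s1 by simp
        thus ?thesis using lf j by (simp add: nth_butlast)
      qed (use s4 in simp)
    qed
    show ?thesis using ff sf by (simp add: prod_eq_iff)
  qed
qed

end

context pgrp begin

lemma face_cons: assumes "1 \<le> i" "i \<le> length c"
  shows "pg_face M (Suc i) (g # c) = g # pg_face M i c"
proof -
  obtain i0 where i0: "i = Suc i0" using assms by (cases i) auto
  show ?thesis using assms unfolding i0 by (cases c) (auto simp: pg_face_def)
qed

lemma degen_cons: "pg_degen M (Suc i) (g # c) = g # pg_degen M i c"
  by (simp add: pg_degen_def)

lemma take_dom: "c \<in> Dw \<Longrightarrow> take j c \<in> Dw" using pre_dom[of "take j c" "drop j c"] by simp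

lemma Q_face: assumes c: "c \<in> Dw" and i: "1 \<le> i" "i \<le> length c" and m: "m \<le> length c - 1"
  shows "Pw (take m (pg_face M i c)) = Pw (take (if m < i then m else Suc m) c)"
proof (cases "i = length c")
  case True
  hence "m < length c" using m i by linarith
  thus ?thesis using True m by (auto simp: pg_face_def take_butlast)
next
  case False
  hence ii: "i < length c" using i by simp
  have a: "c = take (i - 1) c @ c ! (i - 1) # drop (Suc (i - 1)) c" using id_take_nth_drop[of "i - 1" c] ii by simp
  have b: "drop i c = c ! i # drop (Suc i) c" using Cons_nth_drop_Suc[of i c] ii by simp
  have dec: "c = take (i - 1) c @ [c ! (i - 1), c ! i] @ drop (Suc i) c" using a b i by simp
  have f: "pg_face M i c = take (i - 1) c @ [Pw [c ! (i - 1), c ! i]] @ drop (Suc i) c"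
    using i False by (simp add: pg_face_def)
  show ?thesis
  proof (cases "m < i")
    case True
    hence "m \<le> i - 1" by simp
    hence "take m (pg_face M i c) = take m c" using f ii by (auto simp: take_append min_def)
    thus ?thesis using True by simp
  next
    case mi: False
    have t1: "take m (pg_face M i c) = take (i - 1) c @ [Pw [c ! (i - 1), c ! i]] @ take (m - i) (drop (Suc i) c)"
    proof -
      have "Suc m - i = Suc (m - i)" "i - 1 \<le> m" using mi by auto
      thus ?thesis using f mi i ii by (auto simp: take_append min_def)
    qed
    have "take (Suc m) c = take (Suc m) (take (i - 1) c @ [c ! (i - 1), c ! i] @ drop (Suc i) c)"
      using dec by simp
    also have "\<dots> = take (i - 1) c @ [c ! (i - 1), c ! i] @ take (m - i) (drop (Suc i) c)"
    proof -
      have "Suc m - (i - 1) = Suc (Suc (m - i))" "i - 1 \<le> Suc m" using mi i by auto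
      thus ?thesis using mi i ii by (auto simp: take_append min_def)
    qed
    finally have t2: "take (Suc m) c = take (i - 1) c @ [c ! (i - 1), c ! i] @ take (m - i) (drop (Suc i) c)" .
    have "take (Suc m) c \<in> Dw" using take_dom[OF c] .
    hence "Pw (take (Suc m) c) = Pw (take m (pg_face M i c))" using assoc t1 t2 by metis
    thus ?thesis using mi by simp
  qed
qed

lemma Q_degen: assumes c: "c \<in> Dw" and i: "i \<le> length c"
  shows "Pw (take m (pg_degen M i c)) = Pw (take (if m \<le> i then m else m - 1) c)"
proof (cases "m \<le> i")
  case True thus ?thesis using i by (simp add: pg_degen_def take_append min_def)
next
  case False
  have t: "take m (pg_degen M i c) = take i c @ [un] @ take (m - 1 - i) (drop i c)"
  proof -
    have "m - i = Suc (m - Suc i)" using False by simp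
    thus ?thesis using False i by (simp add: pg_degen_def take_append min_def)
  qed
  have t2: "take (m - 1) c = take i c @ take (m - 1 - i) (drop i c)"
    using False take_add[of i "m - 1 - i" c] by simp
  have "take (m - 1) c \<in> Dw" using take_dom[OF c] .
  hence "Pw (take m (pg_degen M i c)) = Pw (take (m - 1) c)" using unit_ins t t2 by metis
  thus ?thesis using False by simp
qed

lemma cons_Q_dom: assumes "g # c \<in> Dw" shows "[g, Pw (take j c)] \<in> Dw"
proof -
  have "[g] @ take j c @ drop j c \<in> Dw" using assms by simp
  hence "[g] @ [Pw (take j c)] @ drop j c \<in> Dw" using assoc by blast
  thus ?thesis using pre_dom[of "[g, Pw (take j c)]"] by simp
qed

lemma cons2_Q_dom: assumes "g1 # g2 # r \<in> Dw" shows "[g1, g2, Pw (take j r)] \<in> Dw"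
proof -
  have "[g1, g2] @ take j r @ drop j r \<in> Dw" using assms by simp
  hence "[g1, g2] @ [Pw (take j r)] @ drop j r \<in> Dw" using assoc by blast
  thus ?thesis using pre_dom[of "[g1, g2, Pw (take j r)]"] by simp
qed

end

locale tp = tw M2 M1 for M2 :: "'a partial_group" and M1 :: "'b partial_group" +
  fixes t :: "'a \<Rightarrow> 'b \<Rightarrow> 'b" and eta :: "'a \<Rightarrow> 'a \<Rightarrow> 'b"
  assumes TP: "twisting_pair M2 M1 t eta"
begin

definition Q :: "'a list \<Rightarrow> nat \<Rightarrow> 'a" where "Q c j = G.Pw (take j c)"
definition Ob :: "'a list \<Rightarrow> nat \<Rightarrow> 'b \<Rightarrow> 'b" where
  "Ob b i = t (G.Pw [hd b, Q (tl b) i]) \<circ> inv (t (Q (tl b) i))"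
definition Ab :: "'a list \<Rightarrow> nat \<Rightarrow> 'b" where "Ab b i = eta (hd b) (Q (tl b) i)"
definition Eb :: "'a list \<Rightarrow> nat \<Rightarrow> 'b" where "Eb b i = H.Pw [H.Iv (Ab b i), Ab b (Suc i)]"
definition PHI :: "'a list \<Rightarrow> 'b aut_simplex" where
  "PHI b = (map (Ob b) [0..<length b], map (Eb b) [0..<length b - 1])"

lemma tA: "t g \<in> H.Aut" using TP unfolding twisting_pair_def by blast
lemma etaN: "[g, h] \<in> G.Dw \<Longrightarrow> eta g h \<in> H.NN" using TP unfolding twisting_pair_def by blast
lemma tconj: "[g, h] \<in> G.Dw \<Longrightarrow> t g = H.cj (eta g h) \<circ> (t (G.Pw [g, h]) \<circ> inv (t h))"
  using TP H.amor_D(4) unfolding twisting_pair_def by blast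
lemma t1: "t G.un = id" using TP unfolding twisting_pair_def by blast
lemma eta1: "eta G.un g = H.un" "eta g G.un = H.un" using TP unfolding twisting_pair_def by blast+
lemma coc: "[g, h, k] \<in> G.Dw \<Longrightarrow>
   H.Pw [t g (eta h k), eta g (G.Pw [h, k])] = H.Pw [eta g h, eta (G.Pw [g, h]) k]"
  using TP unfolding twisting_pair_def by blast

lemma Ob_A: "Ob b i \<in> H.Aut" unfolding Ob_def using tA H.aut_comp H.aut_inv by blast

lemma Ab_N: "g # c \<in> G.Dw \<Longrightarrow> Ab (g # c) j \<in> H.NN"
  using etaN G.cons_Q_dom by (simp add: Ab_def Q_def)

lemma Eb_N: "g # c \<in> G.Dw \<Longrightarrow> Eb (g # c) j \<in> H.NN"
  using Ab_N by (simp add: Eb_def)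

lemma tconjO: "g # c \<in> G.Dw \<Longrightarrow> t g = H.cj (Ab (g # c) j) \<circ> Ob (g # c) j"
  using tconj[OF G.cons_Q_dom] by (simp add: Ab_def Ob_def Q_def)

lemma O_rel: assumes b: "g # c \<in> G.Dw"
  shows "Ob (g # c) j = H.cj (Eb (g # c) j) \<circ> Ob (g # c) (Suc j)"
proof -
  let ?a = "Ab (g # c) j" and ?a' = "Ab (g # c) (Suc j)" and ?O = "Ob (g # c) j" and ?O' = "Ob (g # c) (Suc j)"
  have a: "?a \<in> H.NN" "?a' \<in> H.NN" using Ab_N[OF b] by auto
  have "?O = (inv (H.cj ?a) \<circ> H.cj ?a) \<circ> ?O" using H.NND(2)[OF a(1)] by simp
  also have "\<dots> = inv (H.cj ?a) \<circ> t g" using tconjO[OF b, of j] by (simp add: comp_assoc)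
  also have "\<dots> = inv (H.cj ?a) \<circ> H.cj ?a' \<circ> ?O'" using tconjO[OF b, of "Suc j"] by (simp add: comp_assoc)
  also have "\<dots> = H.cj (Eb (g # c) j) \<circ> ?O'"
    using H.cj_I[OF a(1)] H.cj_prod[OF H.I_NN[OF a(1)] a(2)] by (simp add: Eb_def)
  finally show ?thesis .
qed

lemma T1: assumes b: "b \<in> G.Dw" "b \<noteq> []" shows "nerve_simplex M1 (length b - 1) (PHI b)"
proof -
  obtain g c where gc: "b = g # c" using b by (cases b) auto
  have "aut_mor M1 (Ob b i) (Eb b i) (Ob b (Suc i))" for i
    using H.amor_I[OF Ob_A Ob_A Eb_N O_rel] b gc by simp
  thus ?thesis unfolding nerve_simplex_def PHI_def using Ob_A b by auto
qed

lemma T5: assumes b: "b \<in> G.Dw" shows "PHI (pg_degen M2 0 b) = nerve_unit M1 (length b)"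
proof -
  have d: "pg_degen M2 0 b = G.un # b" by (simp add: pg_degen_def)
  have O: "Ob (G.un # b) i = id" for i using tA[of "Q b i"] by (simp add: Ob_def)
  have E: "Eb (G.un # b) i = H.un" for i by (simp add: Eb_def Ab_def eta1)
  have O': "Ob (G.un # b) = (\<lambda>i. id)" using O by auto
  have E': "Eb (G.un # b) = (\<lambda>i. H.un)" using E by auto
  show ?thesis unfolding d PHI_def nerve_unit_def O' E' by (simp add: map_replicate_const replicate_append_same)
qed

lemma LV: "low_values M2 M1 t eta (\<lambda>n b. PHI b)"
  unfolding low_values_def
proof (intro conjI allI impI)
  fix g show "PHI [g] = ([t g], [])" using t1 by (simp add: PHI_def Ob_def Q_def pone_def[symmetric])
next
  fix g h assume "[g, h] \<in> G.Dw"
  show "PHI [g, h] = ([t g, t (G.Pw [g, h]) \<circ> inv (t h)], [eta g h])"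
    using t1 eta1 by (simp add: PHI_def Ob_def Eb_def Ab_def Q_def pone_def[symmetric] numeral_2_eq_2)
qed

end

context tp begin

lemma T2: assumes b: "b \<in> G.Dw" and i: "2 \<le> i" "i \<le> length b"
  shows "PHI (pg_face M2 i b) = nerve_face M1 (i - 1) (PHI b)"
proof -
  obtain g c where gc: "b = g # c" using i by (cases b) auto
  obtain i' where ii: "i = Suc i'" using i by (cases i) auto
  have i': "1 \<le> i'" "i' \<le> length c" using i ii gc by auto
  have c: "c \<in> G.Dw" using b gc G.suf_dom[of "[g]" c] by simp
  define c' where "c' = pg_face M2 i' c"
  have fb: "pg_face M2 i b = g # c'" using G.face_cons[OF i'] gc ii c'_def by simp
  have cne: "c \<noteq> []" using i' by auto
  have lc: "length c' = length c - 1" using G.face_len[of c i'] i' c'_def cne by simp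
  define \<sigma> where "\<sigma> j = (if j < i' then j else Suc j)" for j
  have Qf: "Q c' j = Q c (\<sigma> j)" if "j \<le> length c - 1" for j
    using G.Q_face[OF c i' that] by (simp add: Q_def \<sigma>_def c'_def)
  have Of: "Ob (g # c') j = Ob b (\<sigma> j)" if "j \<le> length c - 1" for j
    using Qf[OF that] gc by (simp add: Ob_def)
  have Af: "Ab (g # c') j = Ab b (\<sigma> j)" if "j \<le> length c - 1" for j
    using Qf[OF that] gc by (simp add: Ab_def)
  have AN: "Ab b j \<in> H.NN" for j using Ab_N b gc by simp
  have fst_eq: "map (Ob (g # c')) [0..<length (g # c')] =
      take i' (map (Ob b) [0..<length b]) @ drop (Suc i') (map (Ob b) [0..<length b])"
  proof (rule nth_equalityI)
    show "length (map (Ob (g # c')) [0..<length (g # c')]) =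
      length (take i' (map (Ob b) [0..<length b]) @ drop (Suc i') (map (Ob b) [0..<length b]))"
      using lc i' gc by auto
    fix j assume "j < length (map (Ob (g # c')) [0..<length (g # c')])"
    hence j: "j < length c" using lc i' by auto
    show "map (Ob (g # c')) [0..<length (g # c')] ! j =
      (take i' (map (Ob b) [0..<length b]) @ drop (Suc i') (map (Ob b) [0..<length b])) ! j"
    proof -
      have lcs: "Suc (length c - 1) = length c" using cne by simp
      have jj: "j \<le> length c - 1" using j by simp
      have hj: "\<not> j < i' \<Longrightarrow> \<not> j - i' < length c - Suc i' \<Longrightarrow> Suc j = length c" using j by arith
      show ?thesis using j Of[OF jj] i' gc lc lcs hj by (auto simp: nth_append \<sigma>_def)
    qed
  qed
  have snd_eq: "map (Eb (g # c')) [0..<length (g # c') - 1] =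
      pg_face M1 i' (map (Eb b) [0..<length b - 1])"
  proof (rule nth_equalityI)
    show "length (map (Eb (g # c')) [0..<length (g # c') - 1]) =
      length (pg_face M1 i' (map (Eb b) [0..<length b - 1]))"
      using lc i' gc H.face_len[of "map (Eb b) [0..<length b - 1]" i'] cne by auto
    fix j assume "j < length (map (Eb (g # c')) [0..<length (g # c') - 1])"
    hence j: "j < length c - 1" using lc i' by auto
    have R: "pg_face M1 i' (map (Eb b) [0..<length b - 1]) ! j =
      (if j < i' - 1 then Eb b j else if j = i' - 1 then H.Pw [Eb b j, Eb b (Suc j)] else Eb b (Suc j))"
      using H.face_nth[of i' "map (Eb b) [0..<length b - 1]" j] j i' gc by auto
    have L: "map (Eb (g # c')) [0..<length (g # c') - 1] ! j = H.Pw [H.Iv (Ab b (\<sigma> j)), Ab b (\<sigma> (Suc j))]"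
      using j lc Af[of j] Af[of "Suc j"] by (simp add: Eb_def)
    consider "j < i' - 1" | "j = i' - 1" | "i' - 1 < j" by linarith
    thus "map (Eb (g # c')) [0..<length (g # c') - 1] ! j = pg_face M1 i' (map (Eb b) [0..<length b - 1]) ! j"
    proof cases
      case 1
      hence "j < i'" "Suc j < i'" by auto
      thus ?thesis using L R 1 by (simp add: \<sigma>_def Eb_def)
    next
      case 2
      hence "j < i'" "\<not> Suc j < i'" using i' by auto
      thus ?thesis using L R 2 AN by (simp add: \<sigma>_def Eb_def H.gassoc)
    next
      case 3
      hence "\<not> j < i'" "\<not> Suc j < i'" "\<not> j < i' - 1" "j \<noteq> i' - 1" by auto
      thus ?thesis using L R by (simp add: \<sigma>_def Eb_def)
    qed
  qed
  show ?thesis unfolding fb using fst_eq snd_eq ii by (simp add: PHI_def nerve_face_def)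
qed

end

context tp begin

lemma T4: assumes b: "b \<in> G.Dw" and i: "1 \<le> i" "i \<le> length b"
  shows "PHI (pg_degen M2 i b) = nerve_degen M1 (i - 1) (PHI b)"
proof -
  obtain g c where gc: "b = g # c" using i by (cases b) auto
  obtain i' where ii: "i = Suc i'" using i by (cases i) auto
  have i': "i' \<le> length c" using i ii gc by auto
  have c: "c \<in> G.Dw" using b gc G.suf_dom[of "[g]" c] by simp
  define c' where "c' = pg_degen M2 i' c"
  have db: "pg_degen M2 i b = g # c'" using G.degen_cons gc ii c'_def by simp
  have lc: "length c' = Suc (length c)" using i' c'_def by simp
  define \<delta> where "\<delta> j = (if j \<le> i' then j else j - 1)" for j
  have Qd: "Q c' j = Q c (\<delta> j)" for j
    using G.Q_degen[OF c i', of j] by (simp add: Q_def \<delta>_def c'_def)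
  have Od: "Ob (g # c') j = Ob b (\<delta> j)" for j using Qd gc by (simp add: Ob_def)
  have Ad: "Ab (g # c') j = Ab b (\<delta> j)" for j using Qd gc by (simp add: Ab_def)
  have fst_eq: "map (Ob (g # c')) [0..<length (g # c')] =
      take (Suc i') (map (Ob b) [0..<length b]) @ drop i' (map (Ob b) [0..<length b])"
  proof (rule nth_equalityI)
    show "length (map (Ob (g # c')) [0..<length (g # c')]) =
      length (take (Suc i') (map (Ob b) [0..<length b]) @ drop i' (map (Ob b) [0..<length b]))"
      using lc i' gc by auto
    fix j assume "j < length (map (Ob (g # c')) [0..<length (g # c')])"
    hence j: "j \<le> Suc (length c)" using lc by auto
    have hj: "\<not> j < Suc i' \<Longrightarrow> i' + (j - Suc i') = j - 1" by arith
    show "map (Ob (g # c')) [0..<length (g # c')] ! j =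
      (take (Suc i') (map (Ob b) [0..<length b]) @ drop i' (map (Ob b) [0..<length b])) ! j"
      using j Od[of j] i' gc lc hj by (auto simp: nth_append \<delta>_def simp del: upt_Suc)
  qed
  have snd_eq: "map (Eb (g # c')) [0..<length (g # c') - 1] =
      pg_degen M1 i' (map (Eb b) [0..<length b - 1])"
  proof (rule nth_equalityI)
    show "length (map (Eb (g # c')) [0..<length (g # c') - 1]) =
      length (pg_degen M1 i' (map (Eb b) [0..<length b - 1]))"
      using lc i' gc by auto
    fix j assume "j < length (map (Eb (g # c')) [0..<length (g # c') - 1])"
    hence j: "j \<le> length c" using lc by auto
    have R: "pg_degen M1 i' (map (Eb b) [0..<length b - 1]) ! j =
      (if j < i' then Eb b j else if j = i' then H.un else Eb b (j - 1))"
      using H.degen_nth[of i' "map (Eb b) [0..<length b - 1]" j] j i' gc by auto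
    have L: "map (Eb (g # c')) [0..<length (g # c') - 1] ! j = H.Pw [H.Iv (Ab b (\<delta> j)), Ab b (\<delta> (Suc j))]"
      using j lc Ad[of j] Ad[of "Suc j"] by (simp add: Eb_def del: upt_Suc)
    consider "j < i'" | "j = i'" | "i' < j" by linarith
    thus "map (Eb (g # c')) [0..<length (g # c') - 1] ! j = pg_degen M1 i' (map (Eb b) [0..<length b - 1]) ! j"
    proof cases
      case 1 thus ?thesis using L R by (simp add: \<delta>_def Eb_def)
    next
      case 2 thus ?thesis using L R by (simp add: \<delta>_def)
    next
      case 3
      hence "Suc (j - 1) = j" by simp
      thus ?thesis using L R 3 by (simp add: \<delta>_def Eb_def)
    qed
  qed
  show ?thesis unfolding db using fst_eq snd_eq ii by (simp add: PHI_def nerve_degen_def)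
qed

lemma T3: assumes b: "b \<in> G.Dw" and n: "2 \<le> length b"
  shows "PHI (pg_face M2 1 b) = nerve_mult M1 (nerve_face M1 0 (PHI b)) (PHI (pg_face M2 0 b))"
proof -
  obtain g1 g2 r where br: "b = g1 # g2 # r" using n by (cases b; cases "tl b") auto
  define g12 where "g12 = G.Pw [g1, g2]"
  have f1: "pg_face M2 1 b = g12 # r" using br by (simp add: pg_face_def g12_def)
  have f0: "pg_face M2 0 b = g2 # r" using br by (simp add: pg_face_def)
  have b': "g1 # g2 # r \<in> G.Dw" using b br by simp
  have d3: "[g1, g2, Q r j] \<in> G.Dw" for j using G.cons2_Q_dom[OF b'] by (simp add: Q_def)
  have g2r: "g2 # r \<in> G.Dw" using G.suf_dom[of "[g1]" "g2 # r"] b' by simp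
  have Qs: "Q (g2 # r) (Suc j) = G.Pw [g2, Q r j]" for j
    using G.P_cons[of g2 "take j r"] G.take_dom[OF g2r, of "Suc j"] by (simp add: Q_def)
  have as: "G.Pw [g1, G.Pw [g2, Q r j]] = G.Pw [g12, Q r j]" for j
    using G.assoc[of "[g1]" "[g2, Q r j]" "[]"] G.assoc[of "[]" "[g1, g2]" "[Q r j]"] d3[of j]
    by (simp add: g12_def)
  have O: "Ob (g12 # r) j = Ob b (Suc j) \<circ> Ob (g2 # r) j" for j
  proof -
    have "Ob b (Suc j) \<circ> Ob (g2 # r) j =
      t (G.Pw [g1, G.Pw [g2, Q r j]]) \<circ> (inv (t (G.Pw [g2, Q r j])) \<circ> t (G.Pw [g2, Q r j])) \<circ> inv (t (Q r j))"
      using br Qs by (simp add: Ob_def comp_assoc)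
    also have "\<dots> = t (G.Pw [g12, Q r j]) \<circ> inv (t (Q r j))" using as tA by simp
    finally show ?thesis by (simp add: Ob_def)
  qed
  have fst_eq: "map (Ob (g12 # r)) [0..<length (g12 # r)] =
     map (\<lambda>(f, g). f \<circ> g) (zip (fst (nerve_face M1 0 (PHI b))) (fst (PHI (g2 # r))))"
    by (rule nth_equalityI) (auto simp: br PHI_def nerve_face_def O simp del: upt_Suc)
  let ?T = "t g1"
  define B where "B j = Ab (g2 # r) j" for j
  define C where "C j = Ab b (Suc j)" for j
  define D where "D j = Ab (g12 # r) j" for j
  define A2 where "A2 = eta g1 g2"
  have A2N: "A2 \<in> H.NN" using etaN[of g1 g2] d3[of 0] G.pre_dom[of "[g1, g2]"] by (simp add: A2_def)
  have BN: "B j \<in> H.NN" for j using Ab_N[OF g2r] by (simp add: B_def)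
  have CN: "C j \<in> H.NN" for j using Ab_N b br by (simp add: C_def)
  have TB: "?T (B j) \<in> H.NN" for j using H.aut_NN[OF tA BN] .
  have Dj: "D j = H.Pw [H.Iv A2, H.Pw [?T (B j), C j]]" for j
  proof -
    have "H.Pw [?T (B j), C j] = H.Pw [A2, D j]"
      using coc[OF d3[of j]] br Qs by (simp add: B_def C_def D_def A2_def Ab_def g12_def)
    thus ?thesis using H.gcancel1[OF A2N, of "D j"] by simp
  qed
  have Ob1: "Ob b (Suc j) = H.cj (H.Iv (C j)) \<circ> ?T" for j
  proof -
    have "?T = H.cj (C j) \<circ> Ob b (Suc j)" using tconjO[OF b'] br by (simp add: C_def)
    hence "inv (H.cj (C j)) \<circ> ?T = Ob b (Suc j)" using H.NND(2)[OF CN] by (simp add: comp_assoc[symmetric])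
    thus ?thesis using H.cj_I[OF CN] by simp
  qed
  have E: "Eb (g12 # r) j = H.Pw [(Ob b (Suc j)) (Eb (g2 # r) j), Eb b (Suc j)]" for j
  proof -
    have "(Ob b (Suc j)) (Eb (g2 # r) j) = H.cj (H.Iv (C j)) (H.Pw [H.Iv (?T (B j)), ?T (B (Suc j))])"
      using Ob1 H.aut_hom_N[OF tA H.I_NN[OF BN]] H.aut_I[OF tA] by (simp add: Eb_def B_def)
    also have "\<dots> = H.Pw [H.Iv (C j), H.Pw [H.Pw [H.Iv (?T (B j)), ?T (B (Suc j))], C j]]"
      using H.cj_N[OF H.I_NN[OF CN]] by simp
    finally have 1: "(Ob b (Suc j)) (Eb (g2 # r) j) = \<dots>" .
    show ?thesis unfolding 1 using Dj[of j] Dj[of "Suc j"] A2N BN CN TB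
      by (simp add: Eb_def D_def[symmetric] C_def[symmetric] H.gassoc)
  qed
  have snd_eq: "map (Eb (g12 # r)) [0..<length (g12 # r) - 1] =
     map (\<lambda>j. H.Pw [(fst (nerve_face M1 0 (PHI b)) ! j) (snd (PHI (g2 # r)) ! j), snd (nerve_face M1 0 (PHI b)) ! j])
       [0..<length (snd (nerve_face M1 0 (PHI b)))]"
    by (rule nth_equalityI) (auto simp: br PHI_def nerve_face_def pg_face_def E nth_tl simp del: upt_Suc)
  show ?thesis unfolding f1 f0 using fst_eq snd_eq by (simp add: PHI_def nerve_mult_def)
qed

end

context tp begin
lemma TF: "twisting_function M2 M1 (\<lambda>n b. PHI b)"
  unfolding twisting_function_def
proof (intro allI impI ballI)
  fix n b assume n: "1 \<le> n" and b: "b \<in> G.Dw" and l: "length b = n"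
  have ne: "b \<noteq> []" using n l by auto
  have 1: "nerve_simplex M1 (n - 1) (PHI b)" using T1[OF b ne] l by simp
  show "nerve_simplex M1 (n - 1) (PHI b) \<and>
        (\<forall>i. 2 \<le> i \<and> i \<le> n \<longrightarrow> PHI (pg_face M2 i b) = nerve_face M1 (i - 1) (PHI b)) \<and>
        (2 \<le> n \<longrightarrow> PHI (pg_face M2 1 b) = nerve_mult M1 (nerve_face M1 0 (PHI b)) (PHI (pg_face M2 0 b))) \<and>
        (\<forall>i. 1 \<le> i \<and> i \<le> n \<longrightarrow> PHI (pg_degen M2 i b) = nerve_degen M1 (i - 1) (PHI b)) \<and>
        PHI (pg_degen M2 0 b) = nerve_unit M1 n"
    using 1 T2[OF b] T3[OF b] T4[OF b] T5[OF b] l by auto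
qed
end

theorem lemma6p2:
  fixes M2 :: "'a partial_group" and M1 :: "'b partial_group"
  assumes "partial_group M2" and "partial_group M1"
  shows "(\<forall>t eta. twisting_pair M2 M1 t eta \<longrightarrow>
            (\<exists>phi. twisting_function M2 M1 phi \<and> low_values M2 M1 t eta phi \<and>
               (\<forall>psi. twisting_function M2 M1 psi \<and> low_values M2 M1 t eta psi \<longrightarrow>
                  (\<forall>n\<ge>1. \<forall>b\<in>pdom M2. length b = n \<longrightarrow> psi n b = phi n b)))) \<and>
         (\<forall>phi. twisting_function M2 M1 phi \<longrightarrow>
            (\<exists>t eta. twisting_pair M2 M1 t eta \<and> low_values M2 M1 t eta phi))"
proof -
  interpret T: tw M2 M1 unfolding tw_def pgrp_def using assms by auto
  have P1: "\<exists>phi. twisting_function M2 M1 phi \<and> low_values M2 M1 t eta phi \<and>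
               (\<forall>psi. twisting_function M2 M1 psi \<and> low_values M2 M1 t eta psi \<longrightarrow>
                  (\<forall>n\<ge>1. \<forall>b\<in>pdom M2. length b = n \<longrightarrow> psi n b = phi n b))"
    if tp: "twisting_pair M2 M1 t eta" for t eta
  proof -
    interpret P: tp M2 M1 t eta
      unfolding tp_def tp_axioms_def tw_def pgrp_def using assms tp by auto
    have U: "\<forall>n\<ge>1. \<forall>b\<in>pdom M2. length b = n \<longrightarrow> psi n b = P.PHI b"
      if "twisting_function M2 M1 psi" "low_values M2 M1 t eta psi" for psi
    proof (intro allI impI ballI)
      fix n b assume "1 \<le> n" "b \<in> pdom M2" "length b = n"
      thus "psi n b = P.PHI b"
        using T.tf_unique[OF P.TF that(1), of n b] that(2) P.LV unfolding low_values_def by auto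
    qed
    show ?thesis using P.TF P.LV U by blast
  qed
  show ?thesis using P1 T.tf_to_pair by blast
qed

end
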